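(* Let $X$ be a Banach space with a Schauder basis $(e_i)_i$ for which there are constants $C_1,C_2>0$ such that (i) $\|\sum_{i=1}^ne_i\|\le C_1$ for all $n\in\mathbb{N}$, and (ii) $\|\sum_{i=1}^na_ib_ie_i\|\le C_2\|\sum_{i=1}^na_ie_i\|\|\sum_{i=1}^nb_ie_i\|$ for all scalars $(a_i)_{i=1}^n$, $(b_i)_{i=1}^n$. Let $Y=\overline{\mathrm{span}}\{e_i^*:i\in\mathbb{N}\}\subset X^*$. Then $\mathbb{R}I\oplus\mathcal{K}_\mathrm{diag}(Y)$ is isomorphic as a Banach algebra to the unitization $\mathbb{R}e_\omega\oplus X$ of $X$ via the map sending $I\mapsto e_\omega$ and $e_i^{**}\otimes e_i^*\mapsto e_i$ for all $i\in\mathbb{N}$.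
   Context: $(e_i^* )$ are the biorthogonal functionals of $(e_i)$, which form a basic sequence and hence a Schauder basis of $Y$; $(e_i^{**})\subset Y^*$ are the biorthogonal functionals of $(e_i^* )$ in $Y$, and $e_i^{**}\otimes e_i^*$ is the operator $y\mapsto e_i^{**}(y)e_i^*$ on $Y$. An operator $T$ on $Y$ is diagonal if $e_j^{**}(Te_i^* )=0$ for $i\ne j$; $\mathcal{K}_\mathrm{diag}(Y)$ are the compact diagonal operators and $\mathbb{R}I\oplus\mathcal{K}_\mathrm{diag}(Y)$ the unital Banach algebra of operators $\lambda I+K$. $X$ is an algebra under coordinate-wise multiplication $(\sum a_ie_i)(\sum b_ie_i)=\sum a_ib_ie_i$, and $\mathbb{R}e_\omega\oplus X$ is its unitization with $(\lambda e_\omega+x)(\mu e_\omega+y)=\lambda\mu e_\omega+\lambda y+\mu x+xy$. *)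

theory Defs
  imports "HOL-Analysis.Analysis"
begin

definition schauder_basis :: "(nat \<Rightarrow> 'a::banach) \<Rightarrow> bool" where
  "schauder_basis e \<longleftrightarrow>
     (\<forall>x. \<exists>!a::nat \<Rightarrow> real. (\<lambda>n. \<Sum>i<n. a i *\<^sub>R e i) \<longlonglongrightarrow> x)"

text \<open>Coordinate functional values: coef e i x = e_i^*(x).\<close>
definition coef :: "(nat \<Rightarrow> 'a::banach) \<Rightarrow> nat \<Rightarrow> 'a \<Rightarrow> real" where
  "coef e i x = (THE a::nat \<Rightarrow> real. (\<lambda>n. \<Sum>j<n. a j *\<^sub>R e j) \<longlonglongrightarrow> x) i"

definition estar :: "(nat \<Rightarrow> 'a::banach) \<Rightarrow> nat \<Rightarrow> ('a \<Rightarrow>\<^sub>L real)" where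
  "estar e i = Blinfun (coef e i)"

definition Yspace :: "(nat \<Rightarrow> 'a::banach) \<Rightarrow> ('a \<Rightarrow>\<^sub>L real) set" where
  "Yspace e = closure (span (range (estar e)))"

text \<open>Biorthogonal functionals e_i^** of (e_i^*) in Y: evaluation at e_i.\<close>
definition ebb :: "(nat \<Rightarrow> 'a::banach) \<Rightarrow> nat \<Rightarrow> ('a \<Rightarrow>\<^sub>L real) \<Rightarrow> real" where
  "ebb e i y = blinfun_apply y (e i)"

text \<open>Bounded linear operators on Y, represented as functions that vanish outside Y.\<close>
definition bops :: "(nat \<Rightarrow> 'a::banach) \<Rightarrow> (('a \<Rightarrow>\<^sub>L real) \<Rightarrow> ('a \<Rightarrow>\<^sub>L real)) set" where
  "bops e = {T. (\<forall>y\<in>Yspace e. T y \<in> Yspace e)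
     \<and> (\<forall>y\<in>Yspace e. \<forall>z\<in>Yspace e. T (y + z) = T y + T z)
     \<and> (\<forall>c. \<forall>y\<in>Yspace e. T (c *\<^sub>R y) = c *\<^sub>R T y)
     \<and> (\<exists>K. \<forall>y\<in>Yspace e. norm (T y) \<le> K * norm y)
     \<and> (\<forall>y. y \<notin> Yspace e \<longrightarrow> T y = 0)}"

definition idY :: "(nat \<Rightarrow> 'a::banach) \<Rightarrow> ('a \<Rightarrow>\<^sub>L real) \<Rightarrow> ('a \<Rightarrow>\<^sub>L real)" where
  "idY e y = (if y \<in> Yspace e then y else 0)"

definition rank1 :: "(nat \<Rightarrow> 'a::banach) \<Rightarrow> nat \<Rightarrow> ('a \<Rightarrow>\<^sub>L real) \<Rightarrow> ('a \<Rightarrow>\<^sub>L real)" where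
  "rank1 e i y = (if y \<in> Yspace e then ebb e i y *\<^sub>R estar e i else 0)"

definition Kdiag :: "(nat \<Rightarrow> 'a::banach) \<Rightarrow> (('a \<Rightarrow>\<^sub>L real) \<Rightarrow> ('a \<Rightarrow>\<^sub>L real)) set" where
  "Kdiag e = {T \<in> bops e.
     compact (closure (T ` (Yspace e \<inter> cball 0 1)))
     \<and> (\<forall>i j. i \<noteq> j \<longrightarrow> ebb e j (T (estar e i)) = 0)}"

definition diag_alg :: "(nat \<Rightarrow> 'a::banach) \<Rightarrow> (('a \<Rightarrow>\<^sub>L real) \<Rightarrow> ('a \<Rightarrow>\<^sub>L real)) set" where
  "diag_alg e = {(\<lambda>y. c *\<^sub>R idY e y + K y) | c K. K \<in> Kdiag e}"

definition xmul :: "(nat \<Rightarrow> 'a::banach) \<Rightarrow> 'a \<Rightarrow> 'a \<Rightarrow> 'a" where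
  "xmul e x y = (THE z. \<forall>i. coef e i z = coef e i x * coef e i y)"

text \<open>Unitization R e_omega + X as real \<times> 'a, with norm |lambda| + norm x.\<close>
definition umul :: "(nat \<Rightarrow> 'a::banach) \<Rightarrow> real \<times> 'a \<Rightarrow> real \<times> 'a \<Rightarrow> real \<times> 'a" where
  "umul e u v = (fst u * fst v,
      fst u *\<^sub>R snd v + fst v *\<^sub>R snd u + xmul e (snd u) (snd v))"

definition unorm :: "real \<times> 'a::banach \<Rightarrow> real" where
  "unorm u = \<bar>fst u\<bar> + norm (snd u)"

end

theory Submission
  imports Defs
begin


locale SB =
  fixes e :: "nat \<Rightarrow> 'a::banach" and C1 C2 :: real
  assumes basis: "schauder_basis e"
    and C1pos: "C1 > 0" and C1bd: "\<forall>n. norm (\<Sum>i<n. e i) \<le> C1"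
    and C2pos: "C2 > 0" and C2bd: "\<forall>n (a::nat \<Rightarrow> real) b.
        norm (\<Sum>i<n. (a i * b i) *\<^sub>R e i)
          \<le> C2 * norm (\<Sum>i<n. a i *\<^sub>R e i) * norm (\<Sum>i<n. b i *\<^sub>R e i)"
begin

definition P :: "nat \<Rightarrow> 'a \<Rightarrow> 'a" where
  "P n x = (\<Sum>i<n. coef e i x *\<^sub>R e i)"

definition u :: "nat \<Rightarrow> 'a" where "u n = (\<Sum>i<n. e i)"

lemma coef_conv: "(\<lambda>n. P n x) \<longlonglongrightarrow> x"
proof -
  from basis have ex: "\<exists>!a::nat \<Rightarrow> real. (\<lambda>n. \<Sum>i<n. a i *\<^sub>R e i) \<longlonglongrightarrow> x"
    unfolding schauder_basis_def by blast
  have "(\<lambda>n. \<Sum>i<n. (THE a::nat \<Rightarrow> real. (\<lambda>n. \<Sum>j<n. a j *\<^sub>R e j) \<longlonglongrightarrow> x) i *\<^sub>R e i) \<longlonglongrightarrow> x"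
    using theI'[OF ex] by simp
  then show ?thesis unfolding P_def coef_def by simp
qed

lemma coef_unique:
  assumes "(\<lambda>n. \<Sum>i<n. a i *\<^sub>R e i) \<longlonglongrightarrow> x"
  shows "coef e i x = a i"
proof -
  from basis have ex: "\<exists>!a::nat \<Rightarrow> real. (\<lambda>n. \<Sum>i<n. a i *\<^sub>R e i) \<longlonglongrightarrow> x"
    unfolding schauder_basis_def by blast
  have "(THE a::nat \<Rightarrow> real. (\<lambda>n. \<Sum>j<n. a j *\<^sub>R e j) \<longlonglongrightarrow> x) = a"
    by (rule the1_equality[OF ex]) (use assms in simp)
  then show ?thesis unfolding coef_def by simp
qed

lemma coef_conv': "(\<lambda>n. \<Sum>i<n. coef e i x *\<^sub>R e i) \<longlonglongrightarrow> x"
  using coef_conv unfolding P_def .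

lemma vec_eq: assumes "\<And>i. coef e i x = coef e i y" shows "x = y"
proof -
  have "(\<lambda>n. P n x) \<longlonglongrightarrow> y" using coef_conv[of y] unfolding P_def assms .
  then show ?thesis using coef_conv[of x] LIMSEQ_unique by blast
qed

lemma coef_add: "coef e i (x + y) = coef e i x + coef e i y"
proof -
  have "(\<lambda>n. \<Sum>i<n. (coef e i x + coef e i y) *\<^sub>R e i) \<longlonglongrightarrow> x + y"
    using tendsto_add[OF coef_conv'[of x] coef_conv'[of y]]
    by (simp add: scaleR_add_left sum.distrib)
  from coef_unique[OF this] show ?thesis .
qed

lemma coef_scale: "coef e i (c *\<^sub>R x) = c * coef e i x"
proof -
  have "(\<lambda>n. \<Sum>i<n. (c * coef e i x) *\<^sub>R e i) \<longlonglongrightarrow> c *\<^sub>R x"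
    using tendsto_scaleR[OF tendsto_const[of c] coef_conv'[of x]]
    by (simp add: scaleR_sum_right)
  from coef_unique[OF this] show ?thesis .
qed

lemma coef_zero: "coef e i 0 = 0"
  using coef_scale[of i 0 0] by simp

lemma coef_diff: "coef e i (x - y) = coef e i x - coef e i y"
  using coef_add[of i x "(-1) *\<^sub>R y"] coef_scale[of i "-1" y] by simp

lemma coef_sum: "coef e j (\<Sum>i<n. a i *\<^sub>R e i) = (if j < n then a j else 0)"
proof -
  let ?a = "\<lambda>i. if i < n then a i else 0"
  have ev: "\<forall>\<^sub>F N in sequentially. (\<Sum>i<N. ?a i *\<^sub>R e i) = (\<Sum>i<n. a i *\<^sub>R e i)"
  proof (rule eventually_sequentiallyI[of n])
    fix N assume "n \<le> N"
    have "(\<Sum>i<N. ?a i *\<^sub>R e i) = (\<Sum>i\<in>{..<n}. ?a i *\<^sub>R e i)"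
      by (rule sum.mono_neutral_right) (use \<open>n \<le> N\<close> in auto)
    then show "(\<Sum>i<N. ?a i *\<^sub>R e i) = (\<Sum>i<n. a i *\<^sub>R e i)" by simp
  qed
  have "(\<lambda>N. \<Sum>i<N. ?a i *\<^sub>R e i) \<longlonglongrightarrow> (\<Sum>i<n. a i *\<^sub>R e i)"
    by (rule tendsto_eventually[OF ev])
  from coef_unique[OF this] show ?thesis by simp
qed

lemma coef_e: "coef e j (e i) = (if j = i then 1 else 0)"
proof -
  have "(\<Sum>k<Suc i. (if k = i then 1 else 0) *\<^sub>R e k) = e i"
    by (simp add: if_distrib cong: if_cong)
  then show ?thesis using coef_sum[where j=j and n="Suc i" and a="\<lambda>k. if k = i then 1 else 0"] by auto
qed

lemma e_nz: "e i \<noteq> 0"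
  using coef_e[of i i] coef_zero[of i] by auto

lemma coef_P: "coef e j (P n x) = (if j < n then coef e j x else 0)"
  unfolding P_def by (rule coef_sum)

lemma coef_u: "coef e j (u n) = (if j < n then 1 else 0)"
  using coef_sum[where j=j and n=n and a="\<lambda>_. 1"] unfolding u_def by simp

lemma u_bd: "norm (u n) \<le> C1" using C1bd unfolding u_def by blast

lemma P_P: "P n (P n x) = P n x"
  by (rule vec_eq) (simp add: coef_P)

lemma P_sum: "m \<le> n \<Longrightarrow> P n (\<Sum>i<m. a i *\<^sub>R e i) = (\<Sum>i<m. a i *\<^sub>R e i)"
  by (rule vec_eq) (simp add: coef_P coef_sum)

lemma P_u: "m \<le> n \<Longrightarrow> P m (u n) = u m"
  by (rule vec_eq) (auto simp: coef_P coef_u)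

lemma P_add: "P n (x + y) = P n x + P n y"
  by (rule vec_eq) (simp add: coef_P coef_add)
lemma P_scale: "P n (c *\<^sub>R x) = c *\<^sub>R P n x"
  by (rule vec_eq) (simp add: coef_P coef_scale)
lemma P_diff: "P n (x - y) = P n x - P n y"
  by (rule vec_eq) (simp add: coef_P coef_diff)

end


context SB begin

definition "Kc = C1 * C2"
lemma Kc_pos: "Kc > 0" unfolding Kc_def using C1pos C2pos by simp

lemma sum_single: "i < n \<Longrightarrow> (\<Sum>j<n. (a j * (if j = i then 1 else 0)) *\<^sub>R e j) = a i *\<^sub>R e i"
proof -
  assume "i < n"
  have "(a j * (if j = i then 1 else 0)) *\<^sub>R e j = (if j = i then a i *\<^sub>R e i else 0)" for j by simp
  then have "(\<Sum>j<n. (a j * (if j = i then 1 else 0)) *\<^sub>R e j) = (\<Sum>j<n. if j = i then a i *\<^sub>R e i else 0)"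
    by presburger
  also have "\<dots> = a i *\<^sub>R e i" using \<open>i < n\<close> by (simp add: sum.delta)
  finally show ?thesis .
qed

lemma C2_single:
  assumes "i < n" shows "\<bar>a i\<bar> \<le> C2 * norm (\<Sum>j<n. a j *\<^sub>R e j)"
proof -
  have "norm (\<Sum>j<n. (a j * (if j = i then 1 else 0)) *\<^sub>R e j)
     \<le> C2 * norm (\<Sum>j<n. a j *\<^sub>R e j) * norm (\<Sum>j<n. (if j = i then 1 else 0) *\<^sub>R e j)"
    using C2bd[rule_format, where n=n and a=a and b="\<lambda>j. if j = i then 1 else 0"] by simp
  also have "(\<Sum>j<n. (if j = i then (1::real) else 0) *\<^sub>R e j) = e i"
    using sum_single[OF assms, of "\<lambda>_. 1"] by simp
  finally have "\<bar>a i\<bar> * norm (e i) \<le> (C2 * norm (\<Sum>j<n. a j *\<^sub>R e j)) * norm (e i)"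
    using sum_single[OF assms, of a] by simp
  moreover have "norm (e i) > 0" using e_nz by simp
  ultimately show ?thesis by simp
qed

lemma coef_bd: "\<bar>coef e i x\<bar> \<le> C2 * norm x"
proof -
  have ev: "\<forall>\<^sub>F n in sequentially. \<bar>coef e i x\<bar> \<le> C2 * norm (P n x)"
    by (rule eventually_sequentiallyI[of "Suc i"]) (use C2_single[where a="\<lambda>j. coef e j x"] in \<open>simp add: P_def\<close>)
  have "(\<lambda>n. C2 * norm (P n x)) \<longlonglongrightarrow> C2 * norm x"
    by (intro tendsto_intros coef_conv)
  from tendsto_le[OF _ this tendsto_const ev] show ?thesis by simp
qed

lemma P_bd_fin: assumes "m \<le> n" shows "norm (P m z) \<le> Kc * norm (P n z)"
proof -
  let ?b = "\<lambda>j. if j < m then (1::real) else 0"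
  have h: "norm (\<Sum>j<n. (coef e j z * ?b j) *\<^sub>R e j)
     \<le> C2 * norm (\<Sum>j<n. coef e j z *\<^sub>R e j) * norm (\<Sum>j<n. ?b j *\<^sub>R e j)"
    using C2bd[rule_format, where n=n and a="\<lambda>j. coef e j z" and b= ?b] .
  have s1: "(\<Sum>j<n. (coef e j z * ?b j) *\<^sub>R e j) = P m z"
  proof -
    have "(\<Sum>j<n. (coef e j z * ?b j) *\<^sub>R e j) = (\<Sum>j\<in>{..<m}. (coef e j z * ?b j) *\<^sub>R e j)"
      by (rule sum.mono_neutral_right) (use assms in auto)
    then show ?thesis by (simp add: P_def)
  qed
  have s2: "(\<Sum>j<n. ?b j *\<^sub>R e j) = u m"
  proof -
    have "(\<Sum>j<n. ?b j *\<^sub>R e j) = (\<Sum>j\<in>{..<m}. ?b j *\<^sub>R e j)"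
      by (rule sum.mono_neutral_right) (use assms in auto)
    then show ?thesis by (simp add: u_def)
  qed
  from h have "norm (P m z) \<le> C2 * norm (P n z) * norm (u m)"
    unfolding s1 s2 P_def by simp
  also have "\<dots> \<le> C2 * norm (P n z) * C1"
    by (intro mult_left_mono u_bd) (use C2pos in auto)
  finally show ?thesis unfolding Kc_def by (simp add: mult_ac)
qed

lemma P_bd: "norm (P m z) \<le> Kc * norm z"
proof -
  have ev: "\<forall>\<^sub>F n in sequentially. norm (P m z) \<le> Kc * norm (P n z)"
    by (rule eventually_sequentiallyI[of m]) (rule P_bd_fin)
  have "(\<lambda>n. Kc * norm (P n z)) \<longlonglongrightarrow> Kc * norm z"
    by (intro tendsto_intros coef_conv)
  from tendsto_le[OF _ this tendsto_const ev] show ?thesis by simp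
qed

lemma e_eq_u: "e i = u (Suc i) - u i" unfolding u_def by (simp only: sum.lessThan_Suc add_diff_cancel_left')

lemma e_bd: "norm (e i) \<le> 2 * C1"
proof -
  have "norm (e i) \<le> norm (u (Suc i)) + norm (u i)" using norm_triangle_ineq4[of "u (Suc i)" "u i"] e_eq_u[of i] by simp
  also have "\<dots> \<le> 2 * C1" using u_bd[of "Suc i"] u_bd[of i] by linarith
  finally show ?thesis .
qed

lemma e_lower: "1 \<le> C2 * norm (e i)"
proof -
  have "\<bar>coef e i (e i)\<bar> \<le> C2 * norm (e i)" by (rule coef_bd)
  then show ?thesis by (simp add: coef_e)
qed

lemma coef_lim0: "(\<lambda>i. coef e i x) \<longlonglongrightarrow> 0"
proof -
  have d: "(\<lambda>i. P (Suc i) x - P i x) \<longlonglongrightarrow> 0"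
    using tendsto_diff[OF LIMSEQ_Suc[OF coef_conv[of x]] coef_conv[of x]] by simp
  have eq: "P (Suc i) x - P i x = coef e i x *\<^sub>R e i" for i by (simp add: P_def)
  have "(\<lambda>i. C2 * norm (P (Suc i) x - P i x)) \<longlonglongrightarrow> 0"
    using tendsto_mult[OF tendsto_const[of C2] tendsto_norm[OF d]] by simp
  moreover have nb: "norm (coef e i x) \<le> C2 * norm (P (Suc i) x - P i x)" for i
  proof -
    have "\<bar>coef e i x\<bar> = \<bar>coef e i x\<bar> * 1" by simp
    also have "\<dots> \<le> \<bar>coef e i x\<bar> * (C2 * norm (e i))" by (intro mult_left_mono e_lower) auto
    finally show ?thesis unfolding eq by (simp add: mult_ac)
  qed
  ultimately show ?thesis
    using Lim_null_comparison[OF always_eventually[of "\<lambda>i. norm (coef e i x) \<le> C2 * norm (P (Suc i) x - P i x)"]] nb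
    by blast
qed

lemma bl_coef: "bounded_linear (coef e i)"
  by (rule bounded_linear_intro[where K=C2]) (auto simp: coef_add coef_scale mult.commute intro: coef_bd)

lemma estar_apply[simp]: "blinfun_apply (estar e i) = coef e i"
  unfolding estar_def using bl_coef by (simp add: bounded_linear_Blinfun_apply)

lemma bl_P: "bounded_linear (P n)"
  by (rule bounded_linear_intro[where K=Kc]) (auto simp: P_add P_scale mult.commute[of _ Kc] intro: P_bd)

definition "Pb n = Blinfun (P n)"
lemma Pb_apply[simp]: "blinfun_apply (Pb n) = P n"
  unfolding Pb_def using bl_P by (simp add: bounded_linear_Blinfun_apply)
lemma norm_Pb: "norm (Pb n) \<le> Kc"
  by (rule norm_blinfun_bound) (use Kc_pos P_bd in auto)

lemma estar_nz: "estar e i \<noteq> 0"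
proof
  assume "estar e i = 0"
  then have "blinfun_apply (estar e i) (e i) = 0" by simp
  then show False by (simp add: coef_e)
qed

end


context SB begin

definition "qs x w n = (\<Sum>i<n. (coef e i x * coef e i w) *\<^sub>R e i)"

lemma qs_diff_bd:
  assumes "m \<le> n"
  shows "norm (qs x w n - qs x w m) \<le> C2 * Kc * norm w * norm (P n x - P m x)"
proof -
  let ?a = "\<lambda>i. if m \<le> i then coef e i x else 0"
  have e1: "qs x w n - qs x w m = (\<Sum>i<n. (?a i * coef e i w) *\<^sub>R e i)"
    by (rule vec_eq) (use assms in \<open>auto simp: qs_def coef_diff coef_sum\<close>)
  have e2: "P n x - P m x = (\<Sum>i<n. ?a i *\<^sub>R e i)"
    by (rule vec_eq) (use assms in \<open>auto simp: coef_P coef_diff coef_sum\<close>)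
  have "norm (qs x w n - qs x w m) \<le> C2 * norm (P n x - P m x) * norm (P n w)"
    unfolding e1 e2 using C2bd[rule_format, where n=n and a="?a" and b="\<lambda>i. coef e i w"]
    by (simp add: P_def)
  also have "\<dots> \<le> C2 * norm (P n x - P m x) * (Kc * norm w)"
    by (intro mult_left_mono P_bd) (use C2pos in auto)
  finally show ?thesis by (simp add: mult_ac)
qed

lemma qs_Cauchy: "Cauchy (qs x w)"
proof (unfold Cauchy_def, intro allI impI)
  fix \<epsilon> :: real assume "\<epsilon> > 0"
  define B where "B = C2 * Kc * (norm w + 1)"
  have B: "B > 0" unfolding B_def using C2pos Kc_pos
    by (metis mult_pos_pos norm_ge_zero add_nonneg_pos zero_less_one)
  have "Cauchy (\<lambda>n. P n x)" using coef_conv[of x] by (rule LIMSEQ_imp_Cauchy)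
  then obtain M where M: "\<forall>m\<ge>M. \<forall>n\<ge>M. dist (P m x) (P n x) < \<epsilon> / B"
    unfolding Cauchy_def using \<open>\<epsilon> > 0\<close> B by (meson divide_pos_pos)
  have key: "norm (qs x w n - qs x w m) < \<epsilon>" if "m \<ge> M" "n \<ge> M" "m \<le> n" for m n
  proof -
    have "norm (qs x w n - qs x w m) \<le> C2 * Kc * norm w * norm (P n x - P m x)"
      by (rule qs_diff_bd[OF that(3)])
    also have "\<dots> \<le> B * norm (P n x - P m x)"
      unfolding B_def using C2pos Kc_pos by (intro mult_right_mono) auto
    also have "\<dots> < B * (\<epsilon> / B)"
      using M that B by (intro mult_strict_left_mono) (auto simp: dist_norm)
    also have "\<dots> = \<epsilon>" using B by simp
    finally show ?thesis .
  qed
  show "\<exists>M. \<forall>m\<ge>M. \<forall>n\<ge>M. dist (qs x w m) (qs x w n) < \<epsilon>"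
  proof (intro exI allI impI)
    fix m n assume "m \<ge> M" "n \<ge> M"
    show "dist (qs x w m) (qs x w n) < \<epsilon>"
    proof (cases "m \<le> n")
      case True then show ?thesis using key[of m n] \<open>m \<ge> M\<close> \<open>n \<ge> M\<close>
        by (simp add: dist_norm norm_minus_commute)
    next
      case False then show ?thesis using key[of n m] \<open>m \<ge> M\<close> \<open>n \<ge> M\<close>
        by (simp add: dist_norm)
    qed
  qed
qed

lemma xmul_ex1: "\<exists>!z. \<forall>i. coef e i z = coef e i x * coef e i w"
proof -
  obtain z where z: "qs x w \<longlonglongrightarrow> z"
    using qs_Cauchy[of x w] by (auto simp: Cauchy_convergent_iff convergent_def)
  have "\<forall>i. coef e i z = coef e i x * coef e i w"
    using coef_unique[OF z[unfolded qs_def]] by simp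
  moreover have "\<And>z'. \<forall>i. coef e i z' = coef e i x * coef e i w \<Longrightarrow> z' = z"
    using calculation by (intro vec_eq) simp
  ultimately show ?thesis by blast
qed

lemma coef_xmul[simp]: "coef e i (xmul e x w) = coef e i x * coef e i w"
  using theI'[OF xmul_ex1[of x w]] unfolding xmul_def by blast

lemma P_xmul: "P n (xmul e x w) = qs x w n"
  by (rule vec_eq) (simp add: coef_P qs_def coef_sum)

lemma xmul_bd: "norm (xmul e x w) \<le> C2 * norm x * norm w"
proof -
  have ev: "\<forall>\<^sub>F n in sequentially. norm (P n (xmul e x w)) \<le> C2 * norm (P n x) * norm (P n w)"
    unfolding P_xmul unfolding qs_def P_def
    by (intro always_eventually allI) (rule C2bd[rule_format])
  have "(\<lambda>n. norm (P n (xmul e x w))) \<longlonglongrightarrow> norm (xmul e x w)"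
    by (intro tendsto_intros coef_conv)
  moreover have "(\<lambda>n. C2 * norm (P n x) * norm (P n w)) \<longlonglongrightarrow> C2 * norm x * norm w"
    by (intro tendsto_intros coef_conv)
  ultimately show ?thesis using tendsto_le[OF _ _ _ ev] by fastforce
qed

lemma xmul_comm: "xmul e x w = xmul e w x" by (rule vec_eq) simp
lemma xmul_assoc: "xmul e (xmul e x w) z = xmul e x (xmul e w z)" by (rule vec_eq) simp
lemma xmul_add_left: "xmul e (x + y) w = xmul e x w + xmul e y w"
  by (rule vec_eq) (simp add: coef_add algebra_simps)
lemma xmul_add_right: "xmul e w (x + y) = xmul e w x + xmul e w y"
  by (rule vec_eq) (simp add: coef_add algebra_simps)
lemma xmul_scale_left: "xmul e (c *\<^sub>R x) w = c *\<^sub>R xmul e x w"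
  by (rule vec_eq) (simp add: coef_scale)
lemma xmul_scale_right: "xmul e w (c *\<^sub>R x) = c *\<^sub>R xmul e w x"
  by (rule vec_eq) (simp add: coef_scale)
lemma xmul_diff_left: "xmul e (x - y) w = xmul e x w - xmul e y w"
  by (rule vec_eq) (simp add: coef_diff algebra_simps)
lemma xmul_zero_left[simp]: "xmul e 0 w = 0"
  by (rule vec_eq) (simp add: coef_zero)
lemma xmul_u: "xmul e x (u n) = P n x"
  by (rule vec_eq) (simp add: coef_u coef_P)
lemma xmul_e: "xmul e (e i) z = coef e i z *\<^sub>R e i"
  by (rule vec_eq) (simp add: coef_e coef_scale)
lemma xmul_P: "xmul e (P m x) z = (\<Sum>i<m. (coef e i x * coef e i z) *\<^sub>R e i)"
  by (rule vec_eq) (simp add: coef_P coef_sum)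

lemma bl_xmul: "bounded_linear (xmul e x)"
  by (rule bounded_linear_intro[where K="C2 * norm x"])
    (auto simp: xmul_add_right xmul_scale_right intro: order_trans[OF xmul_bd] simp: mult_ac)

definition "Mb x = Blinfun (xmul e x)"
lemma Mb_apply[simp]: "blinfun_apply (Mb x) = xmul e x"
  unfolding Mb_def using bl_xmul by (simp add: bounded_linear_Blinfun_apply)
lemma norm_Mb: "norm (Mb x) \<le> C2 * norm x"
  by (rule norm_blinfun_bound) (use C2pos xmul_bd[of x] in \<open>auto simp: mult_ac\<close>)
lemma Mb_add: "Mb (x + w) = Mb x + Mb w"
  by (rule blinfun_eqI) (simp add: xmul_add_left blinfun.add_left)
lemma Mb_scale: "Mb (c *\<^sub>R x) = c *\<^sub>R Mb x"
  by (rule blinfun_eqI) (simp add: xmul_scale_left blinfun.scaleR_left)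
lemma Mb_diff: "Mb (x - w) = Mb x - Mb w"
  by (rule blinfun_eqI) (simp add: xmul_diff_left blinfun.diff_left)
lemma Mb_zero: "Mb 0 = 0"
  by (rule blinfun_eqI) simp

end


context SB begin

abbreviation "S0 \<equiv> span (range (estar e))"
abbreviation "Y \<equiv> Yspace e"

lemma Y_def': "Y = closure S0" unfolding Yspace_def ..
lemma Y_closed: "closed Y" unfolding Y_def' by simp
lemma S0_Y: "y \<in> S0 \<Longrightarrow> y \<in> Y" unfolding Y_def' using closure_subset by blast
lemma estar_Y: "estar e i \<in> Y" by (intro S0_Y span_base) simp
lemma zero_Y: "0 \<in> Y" by (intro S0_Y span_zero)

lemma Y_scale: "y \<in> Y \<Longrightarrow> c *\<^sub>R y \<in> Y"
proof -
  have "(\<lambda>y. c *\<^sub>R y) ` closure S0 \<subseteq> closure S0"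
    by (rule image_closure_subset) (auto intro: continuous_intros span_mul closure_subset[THEN subsetD])
  then show "y \<in> Y \<Longrightarrow> c *\<^sub>R y \<in> Y" unfolding Y_def' by blast
qed

lemma Y_add: "y \<in> Y \<Longrightarrow> z \<in> Y \<Longrightarrow> y + z \<in> Y"
proof -
  have "(\<lambda>p. fst p + snd p) ` closure (S0 \<times> S0) \<subseteq> closure S0"
    by (rule image_closure_subset) (auto intro!: continuous_intros span_add closure_subset[THEN subsetD])
  then show "y \<in> Y \<Longrightarrow> z \<in> Y \<Longrightarrow> y + z \<in> Y" unfolding Y_def' closure_Times by force
qed

lemma Y_diff: "y \<in> Y \<Longrightarrow> z \<in> Y \<Longrightarrow> y - z \<in> Y"
  using Y_add[of y "(-1) *\<^sub>R z"] Y_scale[of z "-1"] by simp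

lemma compP: "y o\<^sub>L Pb N = (\<Sum>j<N. blinfun_apply y (e j) *\<^sub>R estar e j)"
  by (rule blinfun_eqI) (simp add: P_def blinfun.sum_left blinfun.sum_right blinfun.scaleR_right blinfun.scaleR_left mult.commute)

lemma compP_S0: "y o\<^sub>L Pb N \<in> S0"
  unfolding compP by (intro span_sum span_mul span_base) simp

lemma comp_add: "((a + b) o\<^sub>L M) = (a o\<^sub>L M) + (b o\<^sub>L M)"
  by (rule blinfun_eqI) (simp add: blinfun.add_left)
lemma comp_scale: "((c *\<^sub>R a) o\<^sub>L M) = c *\<^sub>R (a o\<^sub>L M)"
  by (rule blinfun_eqI) (simp add: blinfun.scaleR_left)

lemma compP_ev: assumes "y \<in> S0" shows "\<forall>\<^sub>F N in sequentially. y o\<^sub>L Pb N = y"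
proof -
  have "y \<in> S0 \<and> (\<forall>\<^sub>F N in sequentially. y o\<^sub>L Pb N = y)"
  proof (rule span_induct_alt[OF assms, where h="\<lambda>y. y \<in> S0 \<and> (\<forall>\<^sub>F N in sequentially. y o\<^sub>L Pb N = y)"])
    show "0 \<in> S0 \<and> (\<forall>\<^sub>F N in sequentially. 0 o\<^sub>L Pb N = 0)" by (simp add: span_zero)
  next
    fix c x y assume x: "x \<in> range (estar e)" and h: "y \<in> S0 \<and> (\<forall>\<^sub>F N in sequentially. y o\<^sub>L Pb N = y)"
    from x obtain i where i: "x = estar e i" by blast
    have "\<forall>\<^sub>F N in sequentially. x o\<^sub>L Pb N = x"
      by (rule eventually_sequentiallyI[of "Suc i"]) (auto intro!: blinfun_eqI simp: i coef_P)
    with h[THEN conjunct2] have "\<forall>\<^sub>F N in sequentially. ((c *\<^sub>R x + y) o\<^sub>L Pb N) = c *\<^sub>R x + y"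
      by eventually_elim (simp add: comp_add comp_scale)
    moreover have "c *\<^sub>R x + y \<in> S0" using x h by (auto intro: span_add span_mul span_base)
    ultimately show "(c *\<^sub>R x + y) \<in> S0 \<and> (\<forall>\<^sub>F N in sequentially. ((c *\<^sub>R x + y) o\<^sub>L Pb N) = c *\<^sub>R x + y)"
      by blast
  qed
  then show ?thesis by blast
qed

lemma compP_diff: "(y - z) o\<^sub>L Pb N = (y o\<^sub>L Pb N) - (z o\<^sub>L Pb N)"
  by (rule blinfun_eqI) (simp add: blinfun.diff_left)

lemma compP_tendsto: assumes "y \<in> Y" shows "(\<lambda>N. y o\<^sub>L Pb N) \<longlonglongrightarrow> y"
proof (unfold tendsto_iff, intro allI impI)
  fix \<epsilon> :: real assume "\<epsilon> > 0"
  have K2: "Kc + 2 > 0" using Kc_pos by simp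
  from assms obtain y' where y': "y' \<in> S0" "dist y' y < \<epsilon> / (Kc + 2)"
    unfolding Y_def' closure_approachable using \<open>\<epsilon> > 0\<close> K2 by (meson divide_pos_pos)
  from compP_ev[OF y'(1)] show "\<forall>\<^sub>F N in sequentially. dist (y o\<^sub>L Pb N) y < \<epsilon>"
  proof eventually_elim
    fix N assume N: "y' o\<^sub>L Pb N = y'"
    have "norm ((y o\<^sub>L Pb N) - y) = norm (((y - y') o\<^sub>L Pb N) + (y' - y))"
      using N by (simp add: compP_diff)
    also have "\<dots> \<le> norm ((y - y') o\<^sub>L Pb N) + norm (y' - y)"
      by (rule norm_triangle_ineq)
    also have "\<dots> \<le> norm (y - y') * Kc + norm (y' - y)"
      by (intro add_mono order_trans[OF norm_blinfun_compose] mult_left_mono norm_Pb) auto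
    also have "\<dots> = (Kc + 1) * dist y' y" by (simp add: dist_norm norm_minus_commute algebra_simps)
    also have "\<dots> < (Kc + 2) * (\<epsilon> / (Kc + 2))"
      using y'(2) K2 Kc_pos
      by (smt (verit, ccfv_SIG) mult_right_mono mult_strict_left_mono zero_le_dist)
    also have "\<dots> = \<epsilon>" using K2 by simp
    finally show "dist (y o\<^sub>L Pb N) y < \<epsilon>" by (simp add: dist_norm)
  qed
qed

lemma onecoord:
  assumes "y \<in> Y" "\<And>j. j \<noteq> i \<Longrightarrow> blinfun_apply y (e j) = 0"
  shows "y = blinfun_apply y (e i) *\<^sub>R estar e i"
proof -
  have ev: "\<forall>\<^sub>F N in sequentially. y o\<^sub>L Pb N = blinfun_apply y (e i) *\<^sub>R estar e i"
  proof (rule eventually_sequentiallyI[of "Suc i"])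
    fix N assume "Suc i \<le> N"
    have "(\<Sum>j<N. blinfun_apply y (e j) *\<^sub>R estar e j) = (\<Sum>j<N. if j = i then blinfun_apply y (e i) *\<^sub>R estar e i else 0)"
      by (rule sum.cong) (auto simp: assms(2))
    also have "\<dots> = blinfun_apply y (e i) *\<^sub>R estar e i" using \<open>Suc i \<le> N\<close> by (simp add: sum.delta)
    finally show "y o\<^sub>L Pb N = blinfun_apply y (e i) *\<^sub>R estar e i" by (simp add: compP)
  qed
  show ?thesis using LIMSEQ_unique[OF compP_tendsto[OF assms(1)] tendsto_eventually[OF ev]] .
qed

lemma bl_compL: "bounded_linear (\<lambda>y. y o\<^sub>L M)"
  by (rule bounded_bilinear.bounded_linear_left[OF bounded_bilinear_blinfun_compose])

lemma estar_Mb: "estar e i o\<^sub>L Mb x = coef e i x *\<^sub>R estar e i"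
  by (rule blinfun_eqI) (simp add: blinfun.scaleR_left)

lemma estar_S0_scale: "c *\<^sub>R estar e i \<in> S0"
  by (rule span_mul) (rule span_base, simp)

lemma compMb_Y: assumes "y \<in> Y" shows "y o\<^sub>L Mb x \<in> Y"
proof -
  let ?L = "\<lambda>y. y o\<^sub>L Mb x"
  have lin: "linear ?L" using bl_compL bounded_linear.linear by blast
  have "?L ` S0 = span (?L ` range (estar e))" by (rule span_linear_image[OF lin, symmetric])
  also have "\<dots> \<subseteq> S0"
    by (rule span_minimal) (auto simp: estar_Mb estar_S0_scale subspace_span)
  finally have "?L ` S0 \<subseteq> closure S0" using closure_subset by blast
  then have "?L ` closure S0 \<subseteq> closure S0"
    by (intro image_closure_subset) (auto intro: linear_continuous_on bl_compL)
  then show ?thesis using assms unfolding Y_def' by blast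
qed

end



definition dom_lin :: "'b::real_normed_vector set \<Rightarrow> ('b \<Rightarrow> real) \<Rightarrow> bool" where
  "dom_lin W f \<longleftrightarrow> (\<forall>x\<in>W. \<forall>y\<in>W. f (x + y) = f x + f y) \<and> (\<forall>c. \<forall>x\<in>W. f (c *\<^sub>R x) = c * f x)
     \<and> (\<forall>x\<in>W. f x \<le> norm x)"

lemma dom_lin_zero: "dom_lin W f \<Longrightarrow> subspace W \<Longrightarrow> f 0 = 0"
  unfolding dom_lin_def using subspace_0[of W] by (metis mult_zero_left scaleR_zero_left)

lemma hb_step:
  fixes W :: "'b::real_normed_vector set"
  assumes sW: "subspace W" and dl: "dom_lin W f"
  shows "\<exists>g. dom_lin (span (insert v W)) g \<and> (\<forall>x\<in>W. g x = f x)"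
proof (cases "v \<in> W")
  case True
  then have "span (insert v W) = W"
  proof -
    have sw: "span W = W" using sW by (simp add: span_eq_iff)
    have "span (insert v W) = span W" using span_redundant[of v W] True span_superset[of W] by blast
    then show ?thesis using sw by simp
  qed
  then show ?thesis using dl by auto
next
  case False
  have fadd: "\<And>x y. x \<in> W \<Longrightarrow> y \<in> W \<Longrightarrow> f (x + y) = f x + f y"
    and fmul: "\<And>c x. x \<in> W \<Longrightarrow> f (c *\<^sub>R x) = c * f x"
    and fle: "\<And>x. x \<in> W \<Longrightarrow> f x \<le> norm x" using dl unfolding dom_lin_def by auto
  have f0: "f 0 = 0" by (rule dom_lin_zero[OF dl sW])
  have sw: "span W = W" using sW by (simp add: span_eq_iff)
  define A where "A = {f w - norm (w - v) | w. w \<in> W}"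
  have key: "f w1 - norm (w1 - v) \<le> norm (w2 + v) - f w2" if "w1 \<in> W" "w2 \<in> W" for w1 w2
  proof -
    have "f w1 + f w2 = f (w1 + w2)" using fadd that by simp
    also have "\<dots> \<le> norm (w1 + w2)" using fle subspace_add[OF sW that] by simp
    also have "\<dots> = norm ((w1 - v) + (w2 + v))" by (simp add: algebra_simps)
    also have "\<dots> \<le> norm (w1 - v) + norm (w2 + v)" by (rule norm_triangle_ineq)
    finally show ?thesis by simp
  qed
  have Ane: "A \<noteq> {}" unfolding A_def using subspace_0[OF sW] by blast
  have Abd: "bdd_above A" unfolding A_def bdd_above_def
    using key[OF _ subspace_0[OF sW]] by blast
  define c where "c = Sup A"
  have c_up: "f w - norm (w - v) \<le> c" if "w \<in> W" for w
    unfolding c_def by (rule cSup_upper[OF _ Abd]) (use that A_def in blast)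
  have c_lo: "c \<le> norm (w + v) - f w" if "w \<in> W" for w
    unfolding c_def by (rule cSup_least[OF Ane]) (use that key A_def in blast)
  have ins: "span (insert v W) = {z. \<exists>t. z - t *\<^sub>R v \<in> W}"
    using span_insert[of v W] sw by simp
  have uniq: "s = t" if "z - t *\<^sub>R v \<in> W" "z - s *\<^sub>R v \<in> W" for z s t
  proof (rule ccontr)
    assume "s \<noteq> t"
    have "(s - t) *\<^sub>R v = (z - t *\<^sub>R v) - (z - s *\<^sub>R v)" by (simp add: algebra_simps)
    then have "(s - t) *\<^sub>R v \<in> W" using subspace_diff[OF sW that] by simp
    then have "(1 / (s - t)) *\<^sub>R ((s - t) *\<^sub>R v) \<in> W" by (rule subspace_mul[OF sW])
    then show False using \<open>s \<noteq> t\<close> False by simp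
  qed
  define tt where "tt z = (THE t. z - t *\<^sub>R v \<in> W)" for z
  have tt: "z - tt z *\<^sub>R v \<in> W" if "z \<in> span (insert v W)" for z
  proof -
    from that obtain t where t: "z - t *\<^sub>R v \<in> W" unfolding ins by blast
    have "tt z = t" unfolding tt_def by (rule the_equality[where P="\<lambda>t. z - t *\<^sub>R v \<in> W", OF t]) (use uniq t in blast)
    then show ?thesis using t by simp
  qed
  have tt_eq: "tt z = s" if "z - s *\<^sub>R v \<in> W" for z s
    unfolding tt_def by (rule the_equality[where P="\<lambda>t. z - t *\<^sub>R v \<in> W", OF that]) (use uniq that in blast)
  define g where "g z = f (z - tt z *\<^sub>R v) + tt z * c" for z
  have ext: "\<forall>x\<in>W. g x = f x"
  proof
    fix x assume "x \<in> W"
    then have "tt x = 0" using tt_eq[of x 0] by simp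
    then show "g x = f x" unfolding g_def by simp
  qed
  have gadd: "g (x + y) = g x + g y" if "x \<in> span (insert v W)" "y \<in> span (insert v W)" for x y
  proof -
    have eq: "(x + y) - (tt x + tt y) *\<^sub>R v = (x - tt x *\<^sub>R v) + (y - tt y *\<^sub>R v)"
      by (simp add: algebra_simps)
    have "tt (x + y) = tt x + tt y"
      by (rule tt_eq) (simp only: eq subspace_add[OF sW tt[OF that(1)] tt[OF that(2)]])
    then show ?thesis unfolding g_def using fadd[OF tt[OF that(1)] tt[OF that(2)]] eq
      by (simp add: algebra_simps)
  qed
  have gmul: "g (a *\<^sub>R x) = a * g x" if "x \<in> span (insert v W)" for a x
  proof -
    have eq: "a *\<^sub>R x - (a * tt x) *\<^sub>R v = a *\<^sub>R (x - tt x *\<^sub>R v)" by (simp add: algebra_simps)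
    have "tt (a *\<^sub>R x) = a * tt x"
      by (rule tt_eq) (simp only: eq subspace_mul[OF sW tt[OF that]])
    then show ?thesis unfolding g_def using fmul[OF tt[OF that]] eq by (simp add: algebra_simps)
  qed
  have gle: "g z \<le> norm z" if "z \<in> span (insert v W)" for z
  proof -
    define t where "t = tt z"
    define w where "w = z - t *\<^sub>R v"
    have w: "w \<in> W" unfolding w_def t_def by (rule tt[OF that])
    have z: "z = w + t *\<^sub>R v" unfolding w_def by simp
    have gz: "g z = f w + t * c" unfolding g_def w_def t_def by simp
    consider "t > 0" | "t = 0" | "t < 0" by linarith
    then show ?thesis
    proof cases
      case 1
      have w': "(1 / t) *\<^sub>R w \<in> W" by (rule subspace_mul[OF sW w])
      have "c \<le> norm ((1 / t) *\<^sub>R w + v) - f ((1 / t) *\<^sub>R w)" by (rule c_lo[OF w'])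
      then have "t * c \<le> t * (norm ((1 / t) *\<^sub>R w + v) - f ((1 / t) *\<^sub>R w))"
        using 1 by (simp add: mult_left_mono)
      also have "\<dots> = norm (t *\<^sub>R ((1 / t) *\<^sub>R w + v)) - f w"
        using 1 fmul[OF w] by (simp add: right_diff_distrib)
      also have "t *\<^sub>R ((1 / t) *\<^sub>R w + v) = z" using 1 z by (simp add: scaleR_add_right)
      finally show ?thesis using gz by simp
    next
      case 2 then show ?thesis using gz z fle[OF w] by simp
    next
      case 3
      define s where "s = - t"
      have s: "s > 0" using 3 s_def by simp
      have w': "(1 / s) *\<^sub>R w \<in> W" by (rule subspace_mul[OF sW w])
      have "f ((1 / s) *\<^sub>R w) - norm ((1 / s) *\<^sub>R w - v) \<le> c" by (rule c_up[OF w'])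
      then have "s * (f ((1 / s) *\<^sub>R w) - norm ((1 / s) *\<^sub>R w - v)) \<le> s * c"
        using s by (simp add: mult_left_mono)
      also have "s * (f ((1 / s) *\<^sub>R w) - norm ((1 / s) *\<^sub>R w - v)) = f w - norm (s *\<^sub>R ((1 / s) *\<^sub>R w - v))"
        using s fmul[OF w] by (simp add: right_diff_distrib)
      also have "s *\<^sub>R ((1 / s) *\<^sub>R w - v) = w + t *\<^sub>R v" using s s_def by (simp add: scaleR_diff_right)
      finally show ?thesis using gz z s_def by simp
    qed
  qed
  have "dom_lin (span (insert v W)) g"
    unfolding dom_lin_def using gadd gmul gle by blast
  then show ?thesis using ext by blast
qed

lemma hb_finite:
  fixes W :: "'b::real_normed_vector set"
  assumes "finite F" "subspace W" "dom_lin W f"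
  shows "\<exists>g. dom_lin (span (W \<union> F)) g \<and> (\<forall>x\<in>W. g x = f x)"
  using assms(1)
proof (induction F rule: finite_induct)
  case empty
  have sw: "span W = W" using assms(2) by (simp add: span_eq_iff)
  show ?case by (rule exI[of _ f]) (simp add: sw assms(3))
next
  case (insert a F)
  from insert.IH obtain g1 where g1: "dom_lin (span (W \<union> F)) g1" "\<forall>x\<in>W. g1 x = f x" by blast
  obtain g2 where g2: "dom_lin (span (insert a (span (W \<union> F)))) g2" "\<forall>x\<in>span (W \<union> F). g2 x = g1 x"
    using hb_step[OF subspace_span g1(1)] by blast
  have e1: "W \<union> insert a F = insert a (W \<union> F)" by blast
  have e2: "span (insert a (span (W \<union> F))) = span (W \<union> insert a F)"
    unfolding e1 by (simp only: span_insert span_span)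
  have "\<forall>x\<in>W. g2 x = f x"
  proof
    fix x assume "x \<in> W"
    then have "x \<in> span (W \<union> F)" by (intro span_base) blast
    then show "g2 x = f x" using g1(2) g2(2) \<open>x \<in> W\<close> by simp
  qed
  then show ?case using g2(1) unfolding e2 by blast
qed

lemma dom_lin_abs: "dom_lin W g \<Longrightarrow> x \<in> W \<Longrightarrow> subspace W \<Longrightarrow> \<bar>g x\<bar> \<le> norm x"
proof -
  assume d: "dom_lin W g" and x: "x \<in> W" and s: "subspace W"
  have "g ((-1) *\<^sub>R x) = (-1) * g x" using d x unfolding dom_lin_def by blast
  moreover have "g ((-1) *\<^sub>R x) \<le> norm ((-1) *\<^sub>R x)" using d subspace_mul[OF s x] unfolding dom_lin_def by blast
  moreover have "g x \<le> norm x" using d x unfolding dom_lin_def by blast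
  ultimately show ?thesis by simp
qed

lemma dom_lin_sum:
  assumes d: "dom_lin W g" and s: "subspace W" and fin: "finite I" and xs: "\<And>i. i \<in> I \<Longrightarrow> x i \<in> W"
  shows "g (\<Sum>i\<in>I. c i *\<^sub>R x i) = (\<Sum>i\<in>I. c i * g (x i))"
  using fin xs
proof (induction I rule: finite_induct)
  case empty then show ?case using dom_lin_zero[OF d s] by simp
next
  case (insert a I)
  have m1: "c a *\<^sub>R x a \<in> W" using insert subspace_mul[OF s] by simp
  have m2: "(\<Sum>i\<in>I. c i *\<^sub>R x i) \<in> W" using insert by (intro subspace_sum[OF s] subspace_mul[OF s]) auto
  have "g (\<Sum>i\<in>insert a I. c i *\<^sub>R x i) = g (c a *\<^sub>R x a) + g (\<Sum>i\<in>I. c i *\<^sub>R x i)"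
    using insert d m1 m2 unfolding dom_lin_def by simp
  also have "\<dots> = c a * g (x a) + (\<Sum>i\<in>I. c i * g (x i))"
    using insert d unfolding dom_lin_def by simp
  finally show ?case using insert by simp
qed



context SB begin

lemma norming:
  assumes Pv: "P m v = v"
  shows "\<exists>y\<in>S0. norm y \<le> Kc \<and> blinfun_apply y v = norm v"
proof (cases "v = 0")
  case True then show ?thesis by (intro bexI[of _ 0]) (auto simp: span_zero Kc_pos less_imp_le)
next
  case False
  define W0 where "W0 = span {v}"
  have W0: "W0 = range (\<lambda>k. k *\<^sub>R v)" unfolding W0_def by (rule span_singleton)
  have uq: "s = t" if "s *\<^sub>R v = t *\<^sub>R v" for s t using that False by simp
  define f0 where "f0 z = (THE t. z = t *\<^sub>R v) * norm v" for z
  have f0t: "f0 (t *\<^sub>R v) = t * norm v" for t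
  proof -
    have "(THE s. t *\<^sub>R v = s *\<^sub>R v) = t"
      by (rule the_equality[where P="\<lambda>s. t *\<^sub>R v = s *\<^sub>R v"]) (use uq in auto)
    then show ?thesis unfolding f0_def by simp
  qed
  have dl0: "dom_lin W0 f0"
    unfolding dom_lin_def W0
    by (auto simp: f0t scaleR_add_left[symmetric] algebra_simps simp del: scaleR_add_left
             intro: mult_right_mono)
  have sW0: "subspace W0" unfolding W0_def by (rule subspace_span)
  obtain g where g: "dom_lin (span (W0 \<union> e ` {..<m})) g" "\<forall>x\<in>W0. g x = f0 x"
    using hb_finite[OF _ sW0 dl0, of "e ` {..<m}"] by blast
  define W1 where "W1 = span (W0 \<union> e ` {..<m})"
  have sW1: "subspace W1" unfolding W1_def by (rule subspace_span)
  have eW1: "e i \<in> W1" if "i < m" for i unfolding W1_def using that by (intro span_base) blast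
  have PW1: "P m z \<in> W1" for z
    unfolding P_def by (intro subspace_sum[OF sW1] subspace_mul[OF sW1] eW1) simp
  have vW0: "v \<in> W0" unfolding W0_def by (intro span_base) simp
  have gv: "g v = norm v" using g(2) vW0 f0t[of 1] by simp
  have gP: "g (P m z) = (\<Sum>i<m. coef e i z * g (e i))" for z
    unfolding P_def by (rule dom_lin_sum[OF g(1)[folded W1_def] sW1]) (auto intro: eW1)
  define y where "y = (\<Sum>i<m. g (e i) *\<^sub>R estar e i)"
  have yS0: "y \<in> S0" unfolding y_def by (intro span_sum estar_S0_scale)
  have yap: "blinfun_apply y z = g (P m z)" for z
    unfolding y_def gP by (simp add: blinfun.sum_left blinfun.scaleR_left mult.commute)
  have "norm y \<le> Kc"
  proof (rule norm_blinfun_bound)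
    show "0 \<le> Kc" using Kc_pos by simp
    fix z
    have "norm (blinfun_apply y z) = \<bar>g (P m z)\<bar>" by (simp add: yap)
    also have "\<dots> \<le> norm (P m z)" by (rule dom_lin_abs[OF g(1)[folded W1_def] PW1 sW1])
    also have "\<dots> \<le> Kc * norm z" by (rule P_bd)
    finally show "norm (blinfun_apply y z) \<le> Kc * norm z" .
  qed
  moreover have "blinfun_apply y v = norm v" using yap[of v] Pv gv by simp
  ultimately show ?thesis using yS0 by blast
qed

end



fun bs :: "(nat \<Rightarrow> 'b::real_normed_vector) \<Rightarrow> real \<Rightarrow> nat \<Rightarrow> 'b set" where
  "bs v B 0 = {0}"
| "bs v B (Suc m) = (\<lambda>p. fst p + snd p *\<^sub>R v m) ` (bs v B m \<times> {-B..B})"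

lemma bs_compact: "compact (bs v B m)"
proof (induction m)
  case 0 then show ?case by simp
next
  case (Suc m)
  have "compact (bs v B m \<times> {-B..B})" using Suc by (intro compact_Times) auto
  then show ?case by (simp only: bs.simps) (intro compact_continuous_image continuous_intros)
qed

lemma bs_mem: "(\<And>i. i < m \<Longrightarrow> \<bar>t i\<bar> \<le> B) \<Longrightarrow> (\<Sum>i<m. t i *\<^sub>R v i) \<in> bs v B m"
proof (induction m)
  case 0 then show ?case by simp
next
  case (Suc m)
  then have "(\<Sum>i<m. t i *\<^sub>R v i) \<in> bs v B m" by simp
  moreover have "t m \<in> {-B..B}" using Suc.prems[of m] by auto
  ultimately show ?case by (force simp: image_iff)
qed

context SB begin

definition "Dx x y = (if y \<in> Y then y o\<^sub>L Mb x else 0)"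
definition "Psi c x = (\<lambda>y. c *\<^sub>R idY e y + Dx x y)"

lemma Dx_Y: "Dx x y \<in> Y" unfolding Dx_def by (auto simp: compMb_Y zero_Y)

lemma Dx_bops: "Dx x \<in> bops e"
  unfolding bops_def
proof (intro CollectI conjI ballI allI impI)
  fix y show "Dx x y \<in> Y" by (rule Dx_Y)
next
  fix y z assume "y \<in> Y" "z \<in> Y" then show "Dx x (y + z) = Dx x y + Dx x z"
    by (simp add: Dx_def Y_add comp_add)
next
  fix c y assume "y \<in> Y" then show "Dx x (c *\<^sub>R y) = c *\<^sub>R Dx x y"
    by (simp add: Dx_def Y_scale comp_scale)
next
  show "\<exists>K. \<forall>y\<in>Y. norm (Dx x y) \<le> K * norm y"
  proof (intro exI ballI)
    fix y assume "y \<in> Y"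
    have "norm (Dx x y) \<le> norm y * norm (Mb x)" unfolding Dx_def using \<open>y \<in> Y\<close> by (simp add: norm_blinfun_compose)
    then show "norm (Dx x y) \<le> norm (Mb x) * norm y" by (simp add: mult.commute)
  qed
next
  fix y assume "y \<notin> Y" then show "Dx x y = 0" by (simp add: Dx_def)
qed

lemma Dx_estar: "Dx x (estar e i) = coef e i x *\<^sub>R estar e i"
  by (simp add: Dx_def estar_Y estar_Mb)

lemma Dx_diag: "i \<noteq> j \<Longrightarrow> ebb e j (Dx x (estar e i)) = 0"
  by (simp add: Dx_estar ebb_def blinfun.scaleR_left coef_e)

lemma compMb_P: "y o\<^sub>L Mb (P m x) = (\<Sum>i<m. blinfun_apply y (e i) *\<^sub>R (coef e i x *\<^sub>R estar e i))"
  by (rule blinfun_eqI)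
     (simp add: xmul_P blinfun.sum_right blinfun.scaleR_right blinfun.sum_left blinfun.scaleR_left mult_ac)

lemma Dx_compact: "compact (closure (Dx x ` (Y \<inter> cball 0 1)))"
proof -
  define A where "A = Dx x ` (Y \<inter> cball 0 1)"
  have tb: "\<exists>k. finite k \<and> A \<subseteq> (\<Union>c\<in>k. ball c \<epsilon>)" if "\<epsilon> > 0" for \<epsilon>
  proof -
    have "\<forall>\<^sub>F m in sequentially. dist (P m x) x < \<epsilon> / (2 * C2)"
      using coef_conv[of x] that C2pos unfolding tendsto_iff by simp
    then obtain m where m: "norm (x - P m x) < \<epsilon> / (2 * C2)"
      by (metis (no_types, lifting) dist_norm eventually_sequentially norm_minus_commute order_refl)
    define v where "v i = coef e i x *\<^sub>R estar e i" for i
    have "compact (bs v (2 * C1) m)" by (rule bs_compact)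
    moreover have "\<epsilon> / 2 > 0" using that by simp
    ultimately obtain k where k: "finite k" "bs v (2 * C1) m \<subseteq> (\<Union>c\<in>k. ball c (\<epsilon> / 2))"
      unfolding compact_eq_totally_bounded by blast
    have "A \<subseteq> (\<Union>c\<in>k. ball c \<epsilon>)"
    proof (rule subsetI)
      fix a assume "a \<in> A"
      then obtain y where y0: "y \<in> Y \<inter> cball 0 1" "a = Dx x y" unfolding A_def by (rule imageE)
      have yY: "y \<in> Y" using y0(1) by (rule IntD1)
      have "y \<in> cball 0 1" using y0(1) by (rule IntD2)
      then have yn: "norm y \<le> 1" by (simp add: dist_norm)
      have ya: "a = y o\<^sub>L Mb x" using y0(2) yY by (simp add: Dx_def)
      note y = yY yn ya
      define b where "b = y o\<^sub>L Mb (P m x)"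
      have "b \<in> bs v (2 * C1) m" unfolding b_def compMb_P v_def
      proof (rule bs_mem)
        fix i
        have "\<bar>blinfun_apply y (e i)\<bar> \<le> norm y * norm (e i)" using norm_blinfun[of y "e i"] by simp
        also have "\<dots> \<le> 1 * (2 * C1)" using y(2) e_bd[of i] by (intro mult_mono) auto
        finally show "\<bar>blinfun_apply y (e i)\<bar> \<le> 2 * C1" by simp
      qed
      then have "b \<in> (\<Union>c\<in>k. ball c (\<epsilon> / 2))" using k(2) by (rule subsetD[rotated])
      then obtain c where c0: "c \<in> k" "b \<in> ball c (\<epsilon> / 2)" by (rule UN_E)
      then have c: "c \<in> k" "dist c b < \<epsilon> / 2" by auto
      have "a - b = y o\<^sub>L Mb (x - P m x)" unfolding y(3) b_def Mb_diff
        by (rule bounded_bilinear.diff_right[OF bounded_bilinear_blinfun_compose, symmetric])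
      then have "dist a b = norm (y o\<^sub>L Mb (x - P m x))" by (simp add: dist_norm)
      also have "\<dots> \<le> norm y * norm (Mb (x - P m x))" by (rule norm_blinfun_compose)
      also have "\<dots> \<le> norm y * (C2 * norm (x - P m x))" by (intro mult_left_mono norm_Mb) auto
      also have "\<dots> \<le> 1 * (C2 * norm (x - P m x))" using y(2) C2pos by (intro mult_right_mono) auto
      also have "\<dots> < C2 * (\<epsilon> / (2 * C2))" using m C2pos by (simp only: mult_1_left mult_strict_left_mono)
      also have "\<dots> = \<epsilon> / 2" using C2pos by simp
      finally have "dist a b < \<epsilon> / 2" .
      then have "dist c a < \<epsilon>" using c(2) dist_triangle[of c a b] by (simp add: dist_commute)
      then have "a \<in> ball c \<epsilon>" by simp
      then show "a \<in> (\<Union>c\<in>k. ball c \<epsilon>)" using c(1) by (rule UN_I[rotated])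
    qed
    then show ?thesis using k(1) by blast
  qed
  have "\<exists>k. finite k \<and> closure A \<subseteq> (\<Union>c\<in>k. ball c \<epsilon>)" if "\<epsilon> > 0" for \<epsilon>
  proof -
    have "\<epsilon> / 2 > 0" using that by simp
    then obtain k where k: "finite k" "A \<subseteq> (\<Union>c\<in>k. ball c (\<epsilon> / 2))" using tb[of "\<epsilon> / 2"] by blast
    have "closure A \<subseteq> (\<Union>c\<in>k. ball c \<epsilon>)"
    proof (rule subsetI)
      fix z assume "z \<in> closure A"
      then obtain a where a: "a \<in> A" "dist a z < \<epsilon> / 2"
        unfolding closure_approachable using \<open>\<epsilon> / 2 > 0\<close> by blast
      then obtain c where c: "c \<in> k" "dist c a < \<epsilon> / 2" using k(2) by auto
      have "dist c z < \<epsilon>" using a(2) c(2) dist_triangle[of c z a] by simp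
      then show "z \<in> (\<Union>c\<in>k. ball c \<epsilon>)" using c(1) by auto
    qed
    then show ?thesis using k(1) by blast
  qed
  moreover have "complete (closure A)" by (simp add: complete_eq_closed)
  ultimately have "compact (closure A)" unfolding compact_eq_totally_bounded by blast
  then show ?thesis unfolding A_def .
qed

lemma Dx_Kdiag: "Dx x \<in> Kdiag e"
  unfolding Kdiag_def using Dx_bops Dx_compact Dx_diag by blast

lemma Psi_in: "Psi c x \<in> diag_alg e"
  unfolding diag_alg_def Psi_def using Dx_Kdiag by blast

end



lemma onorm_le_bd:
  assumes "0 \<le> B" "\<And>y. norm (T y) \<le> B * norm y"
  shows "onorm T \<le> B"
  unfolding onorm_def
proof (rule cSUP_least)
  fix y show "norm (T y) / norm y \<le> B"
    using assms by (cases "y = 0") (auto simp: divide_le_eq mult.commute)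
qed simp

lemma onorm_ge_bd:
  assumes "\<And>y. norm (T y) \<le> B * norm y"
  shows "norm (T y) \<le> onorm T * norm y"
proof (cases "y = 0")
  case True then show ?thesis using assms[of 0] by simp
next
  case False
  have bdd: "bdd_above (range (\<lambda>y. norm (T y) / norm y))"
    unfolding bdd_above_def
  proof (intro exI allI ballI)
    fix r assume "r \<in> range (\<lambda>y. norm (T y) / norm y)"
    then obtain z where z: "r = norm (T z) / norm z" by blast
    show "r \<le> \<bar>B\<bar>"
    proof (cases "z = 0")
      case True then show ?thesis using z by simp
    next
      case False
      have "norm (T z) \<le> \<bar>B\<bar> * norm z" using assms[of z] by (meson abs_ge_self mult_right_mono norm_ge_zero order_trans)
      then show ?thesis using z False by (simp add: divide_le_eq)
    qed
  qed
  have "norm (T y) / norm y \<le> onorm T" unfolding onorm_def by (rule cSUP_upper[OF _ bdd]) simp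
  then show ?thesis using False by (simp add: divide_le_eq)
qed

context SB begin

lemma Psi_Y: "y \<in> Y \<Longrightarrow> Psi c x y = c *\<^sub>R y + (y o\<^sub>L Mb x)"
  by (simp add: Psi_def idY_def Dx_def)
lemma Psi_nY: "y \<notin> Y \<Longrightarrow> Psi c x y = 0"
  by (simp add: Psi_def idY_def Dx_def)
lemma Psi_in_Y: "Psi c x y \<in> Y"
  by (cases "y \<in> Y") (simp_all add: Psi_Y Psi_nY Y_add Y_scale compMb_Y zero_Y)

lemma comp_add_right: "(y o\<^sub>L (a + b)) = (y o\<^sub>L a) + (y o\<^sub>L b)"
  by (rule blinfun_eqI) (simp add: blinfun.add_left blinfun.add_right)
lemma comp_scale_right: "(y o\<^sub>L (c *\<^sub>R a)) = c *\<^sub>R (y o\<^sub>L a)"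
  by (rule blinfun_eqI) (simp add: blinfun.scaleR_left blinfun.scaleR_right)

lemma Psi_add: "(\<lambda>y. Psi c x y + Psi d w y) = Psi (c + d) (x + w)"
proof
  fix y show "Psi c x y + Psi d w y = Psi (c + d) (x + w) y"
    by (cases "y \<in> Y") (simp_all add: Psi_Y Psi_nY Mb_add comp_add_right scaleR_add_left algebra_simps)
qed

lemma Psi_scale: "(\<lambda>y. a *\<^sub>R Psi c x y) = Psi (a * c) (a *\<^sub>R x)"
proof
  fix y show "a *\<^sub>R Psi c x y = Psi (a * c) (a *\<^sub>R x) y"
    by (cases "y \<in> Y") (simp_all add: Psi_Y Psi_nY Mb_scale comp_scale_right scaleR_add_right)
qed

lemma Mb_comp: "(Mb w o\<^sub>L Mb x) = Mb (xmul e x w)"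
  by (rule blinfun_eqI) (simp, rule vec_eq, simp add: mult_ac)

lemma Psi_comp: "Psi c x \<circ> Psi d w = (\<lambda>y. Psi (fst (umul e (c, x) (d, w))) (snd (umul e (c, x) (d, w))) y)"
proof
  fix y
  show "(Psi c x \<circ> Psi d w) y = Psi (fst (umul e (c, x) (d, w))) (snd (umul e (c, x) (d, w))) y"
  proof (cases "y \<in> Y")
    case True
    have z: "Psi d w y \<in> Y" by (rule Psi_in_Y)
    have "(Psi c x \<circ> Psi d w) y = c *\<^sub>R (d *\<^sub>R y + (y o\<^sub>L Mb w)) + ((d *\<^sub>R y + (y o\<^sub>L Mb w)) o\<^sub>L Mb x)"
      using Psi_Y[OF z, of c x] Psi_Y[OF True, of d w] by simp
    also have "\<dots> = (c * d) *\<^sub>R y + (y o\<^sub>L Mb (c *\<^sub>R w + d *\<^sub>R x + xmul e x w))"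
    proof (rule blinfun_eqI)
      fix z
      have sw: "xmul e w (xmul e x z) = xmul e (xmul e x w) z" by (rule vec_eq) (simp add: mult_ac)
      show "blinfun_apply (c *\<^sub>R (d *\<^sub>R y + (y o\<^sub>L Mb w)) + ((d *\<^sub>R y + (y o\<^sub>L Mb w)) o\<^sub>L Mb x)) z =
            blinfun_apply ((c * d) *\<^sub>R y + (y o\<^sub>L Mb (c *\<^sub>R w + d *\<^sub>R x + xmul e x w))) z"
        by (simp add: blinfun.add_left blinfun.scaleR_left blinfun.add_right blinfun.scaleR_right
            xmul_add_left xmul_scale_left sw algebra_simps)
    qed
    also have "\<dots> = Psi (fst (umul e (c, x) (d, w))) (snd (umul e (c, x) (d, w))) y"
      using True by (simp add: umul_def Psi_Y)
    finally show ?thesis .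
  next
    case False
    then show ?thesis by (simp add: Psi_nY Psi_Y zero_Y)
  qed
qed

lemma Psi_estar: "Psi c x (estar e i) = (c + coef e i x) *\<^sub>R estar e i"
  by (simp add: Psi_Y estar_Y estar_Mb scaleR_add_left)

lemma Psi_inj:
  assumes "Psi c x = Psi d w" shows "c = d \<and> x = w"
proof -
  have h: "c + coef e i x = d + coef e i w" for i
  proof -
    have "(c + coef e i x) *\<^sub>R estar e i = (d + coef e i w) *\<^sub>R estar e i"
      using assms Psi_estar by metis
    then show ?thesis using estar_nz[of i] by simp
  qed
  have "(\<lambda>i. c + coef e i x) \<longlonglongrightarrow> c + 0" by (intro tendsto_intros coef_lim0)
  moreover have "(\<lambda>i. c + coef e i x) \<longlonglongrightarrow> d + 0" unfolding h by (intro tendsto_intros coef_lim0)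
  ultimately have cd: "c = d" using LIMSEQ_unique by fastforce
  then have "x = w" using h by (intro vec_eq) simp
  with cd show ?thesis by simp
qed

lemma Psi_1: "Psi 1 0 = idY e"
  by (rule ext) (simp add: Psi_def Dx_def Mb_zero idY_def)

lemma Psi_rank1: "Psi 0 (e i) = rank1 e i"
proof
  fix y show "Psi 0 (e i) y = rank1 e i y"
  proof (cases "y \<in> Y")
    case True
    have "(y o\<^sub>L Mb (e i)) = ebb e i y *\<^sub>R estar e i"
      by (rule blinfun_eqI) (simp add: xmul_e ebb_def blinfun.scaleR_left blinfun.scaleR_right mult.commute)
    then show ?thesis using True by (simp add: Psi_Y rank1_def)
  next
    case False then show ?thesis by (simp add: Psi_nY rank1_def)
  qed
qed

lemma Psi_bd: "norm (Psi c x y) \<le> (\<bar>c\<bar> + C2 * norm x) * norm y"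
proof (cases "y \<in> Y")
  case True
  have "norm (Psi c x y) \<le> norm (c *\<^sub>R y) + norm (y o\<^sub>L Mb x)"
    using True by (simp only: Psi_Y norm_triangle_ineq)
  also have "norm (y o\<^sub>L Mb x) \<le> norm y * (C2 * norm x)"
    by (rule order_trans[OF norm_blinfun_compose]) (intro mult_left_mono norm_Mb, simp)
  finally show ?thesis by (simp add: algebra_simps)
next
  case False then show ?thesis using C2pos by (simp add: Psi_nY)
qed

lemma onorm_Psi_upper: "onorm (Psi c x) \<le> max 1 C2 * (\<bar>c\<bar> + norm x)"
proof (rule onorm_le_bd)
  show "0 \<le> max 1 C2 * (\<bar>c\<bar> + norm x)" by simp
  fix y
  have mm: "\<bar>c\<bar> + C2 * norm x \<le> max 1 C2 * (\<bar>c\<bar> + norm x)"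
    using mult_right_mono[of 1 "max 1 C2" "\<bar>c\<bar>"] mult_right_mono[of C2 "max 1 C2" "norm x"]
    by (simp add: distrib_left)
  show "norm (Psi c x y) \<le> max 1 C2 * (\<bar>c\<bar> + norm x) * norm y"
    by (rule order_trans[OF Psi_bd[of c x y] mult_right_mono[OF mm norm_ge_zero]])
qed

lemma onorm_Psi_lower: "\<bar>c\<bar> + norm x \<le> (1 + 2 * Kc * C1) * onorm (Psi c x)"
proof -
  define On where "On = onorm (Psi c x)"
  have bd: "norm (Psi c x y) \<le> On * norm y" for y
    unfolding On_def by (rule onorm_ge_bd[OF Psi_bd])
  have "0 \<le> On * norm (estar e 0)" using bd[of "estar e 0"] norm_ge_zero order_trans by blast
  then have O0: "0 \<le> On" using estar_nz[of 0] by (simp add: zero_le_mult_iff)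
  have ci: "\<bar>c + coef e i x\<bar> \<le> On" for i
  proof -
    have "\<bar>c + coef e i x\<bar> * norm (estar e i) \<le> On * norm (estar e i)"
      using bd[of "estar e i"] by (simp add: Psi_estar)
    then show ?thesis using estar_nz[of i] by simp
  qed
  have "(\<lambda>i. \<bar>c + coef e i x\<bar>) \<longlonglongrightarrow> \<bar>c + 0\<bar>" by (intro tendsto_intros coef_lim0)
  then have cO: "\<bar>c\<bar> \<le> On" using ci by (simp add: Lim_bounded)
  have Pn: "norm (P n x) \<le> 2 * Kc * C1 * On" for n
  proof -
    obtain y where y: "y \<in> S0" "norm y \<le> Kc" "blinfun_apply y (P n x) = norm (P n x)"
      using norming[OF P_P] by blast
    have yY: "y \<in> Y" using y(1) by (rule S0_Y)
    have "(y o\<^sub>L Mb x) = Psi c x y - c *\<^sub>R y" using yY by (simp add: Psi_Y)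
    moreover have "norm (Psi c x y - c *\<^sub>R y) \<le> norm (Psi c x y) + norm (c *\<^sub>R y)"
      by (rule norm_triangle_ineq4)
    ultimately have "norm (y o\<^sub>L Mb x) \<le> On * norm y + \<bar>c\<bar> * norm y"
      using bd[of y] by simp
    also have "\<dots> \<le> On * Kc + On * Kc"
      using cO O0 y(2) by (intro add_mono mult_left_mono mult_mono) auto
    also have "\<dots> = 2 * On * Kc" by simp
    finally have n1: "norm (y o\<^sub>L Mb x) \<le> 2 * On * Kc" .
    have "norm (P n x) = blinfun_apply (y o\<^sub>L Mb x) (u n)" by (simp add: xmul_u y(3))
    also have "\<dots> \<le> norm (y o\<^sub>L Mb x) * norm (u n)"
      using norm_blinfun[of "y o\<^sub>L Mb x" "u n"] by simp
    also have "\<dots> \<le> (2 * On * Kc) * C1" using n1 u_bd[of n] O0 Kc_pos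
      by (intro mult_mono) auto
    finally show ?thesis by (simp add: mult_ac)
  qed
  have "(\<lambda>n. norm (P n x)) \<longlonglongrightarrow> norm x" by (intro tendsto_intros coef_conv)
  then have "norm x \<le> 2 * Kc * C1 * On" using Pn by (simp add: Lim_bounded)
  with cO show ?thesis unfolding On_def[symmetric] by (simp add: algebra_simps)
qed

end


context SB begin

lemma Zlem:
  assumes "a \<ge> N" "b \<ge> N"
  shows "\<bar>blinfun_apply z (u a) - blinfun_apply z (u b)\<bar> \<le> 2 * C1 * norm (z - (z o\<^sub>L Pb N))"
proof -
  define d where "d = z - (z o\<^sub>L Pb N)"
  have za: "blinfun_apply z (u a) = blinfun_apply d (u a) + blinfun_apply z (u N)"
    unfolding d_def using P_u[OF assms(1)] by (simp add: blinfun.diff_left)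
  have zb: "blinfun_apply z (u b) = blinfun_apply d (u b) + blinfun_apply z (u N)"
    unfolding d_def using P_u[OF assms(2)] by (simp add: blinfun.diff_left)
  have ba: "\<bar>blinfun_apply d (u a)\<bar> \<le> norm d * C1"
    using norm_blinfun[of d "u a"] u_bd[of a] by (metis real_norm_def mult_left_mono norm_ge_zero order_trans)
  have bb: "\<bar>blinfun_apply d (u b)\<bar> \<le> norm d * C1"
    using norm_blinfun[of d "u b"] u_bd[of b] by (metis real_norm_def mult_left_mono norm_ge_zero order_trans)
  have two: "2 * C1 * norm d = norm d * C1 + norm d * C1" by (simp add: algebra_simps)
  show ?thesis unfolding za zb d_def[symmetric] two using ba bb by linarith
qed

lemma Kdiag_surj:
  assumes K: "K \<in> Kdiag e"
  shows "\<exists>x. K = Dx x"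
proof -
  have Kb: "K \<in> bops e" and Kcpt: "compact (closure (K ` (Y \<inter> cball 0 1)))"
    and Kdg0: "\<forall>i j. i \<noteq> j \<longrightarrow> ebb e j (K (estar e i)) = 0"
    using K unfolding Kdiag_def by blast+
  have KY0: "\<forall>y\<in>Y. K y \<in> Y"
    and Kadd0: "\<forall>y\<in>Y. \<forall>z\<in>Y. K (y + z) = K y + K z"
    and Kscale0: "\<forall>c. \<forall>y\<in>Y. K (c *\<^sub>R y) = c *\<^sub>R K y"
    and Kbd0: "\<exists>B. \<forall>y\<in>Y. norm (K y) \<le> B * norm y"
    and Kout0: "\<forall>y. y \<notin> Y \<longrightarrow> K y = 0"
    using Kb unfolding bops_def by blast+
  have KY: "\<And>y. y \<in> Y \<Longrightarrow> K y \<in> Y" using KY0 by blast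
  have Kadd: "\<And>y z. y \<in> Y \<Longrightarrow> z \<in> Y \<Longrightarrow> K (y + z) = K y + K z" using Kadd0 by blast
  have Kscale: "\<And>c y. y \<in> Y \<Longrightarrow> K (c *\<^sub>R y) = c *\<^sub>R K y" using Kscale0 by blast
  have Kout: "\<And>y. y \<notin> Y \<Longrightarrow> K y = 0" using Kout0 by blast
  have Kdg: "\<And>i j. i \<noteq> j \<Longrightarrow> ebb e j (K (estar e i)) = 0" using Kdg0 by blast
  obtain B0 where Kbd: "\<And>y. y \<in> Y \<Longrightarrow> norm (K y) \<le> B0 * norm y"
    using Kbd0 by blast
  have K0: "K 0 = 0" using Kscale[OF zero_Y, of 0] by simp
  have Kdiff: "K (y - z) = K y - K z" if "y \<in> Y" "z \<in> Y" for y z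
    using Kadd[OF that(1) Y_scale[OF that(2), of "-1"]] Kscale[OF that(2), of "-1"] by simp
  define lam where "lam i = blinfun_apply (K (estar e i)) (e i)" for i
  have K1: "K (estar e i) = lam i *\<^sub>R estar e i" for i
    unfolding lam_def by (rule onecoord[OF KY[OF estar_Y]]) (use Kdg in \<open>auto simp: ebb_def\<close>)
  have K3: "\<forall>i. blinfun_apply (K y) (e i) = lam i * blinfun_apply y (e i)" if "y \<in> S0" for y
  proof -
    have "y \<in> S0 \<and> (\<forall>i. blinfun_apply (K y) (e i) = lam i * blinfun_apply y (e i))"
    proof (rule span_induct_alt[OF that, where h="\<lambda>y. y \<in> S0 \<and> (\<forall>i. blinfun_apply (K y) (e i) = lam i * blinfun_apply y (e i))"])
      show "0 \<in> S0 \<and> (\<forall>i. blinfun_apply (K 0) (e i) = lam i * blinfun_apply 0 (e i))"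
        by (simp add: K0 span_zero)
    next
      fix c v y assume v: "v \<in> range (estar e)"
        and h: "y \<in> S0 \<and> (\<forall>i. blinfun_apply (K y) (e i) = lam i * blinfun_apply y (e i))"
      from v obtain j where j: "v = estar e j" by blast
      have yY: "y \<in> Y" using h S0_Y by blast
      have eq: "K (c *\<^sub>R v + y) = (c * lam j) *\<^sub>R estar e j + K y"
        unfolding j using Kadd[OF Y_scale[OF estar_Y] yY] Kscale[OF estar_Y] K1 by simp
      have "\<forall>i. blinfun_apply (K (c *\<^sub>R v + y)) (e i) = lam i * blinfun_apply (c *\<^sub>R v + y) (e i)"
      proof
        fix i
        have "blinfun_apply (K (c *\<^sub>R v + y)) (e i) = c * lam j * coef e j (e i) + blinfun_apply (K y) (e i)"
          unfolding eq by (simp add: blinfun.add_left blinfun.scaleR_left)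
        also have "\<dots> = lam i * (c * coef e j (e i) + blinfun_apply y (e i))"
          using h by (cases "i = j") (simp_all add: coef_e algebra_simps)
        also have "c * coef e j (e i) + blinfun_apply y (e i) = blinfun_apply (c *\<^sub>R v + y) (e i)"
          unfolding j by (simp add: blinfun.add_left blinfun.scaleR_left)
        finally show "blinfun_apply (K (c *\<^sub>R v + y)) (e i) = lam i * blinfun_apply (c *\<^sub>R v + y) (e i)" .
      qed
      moreover have "c *\<^sub>R v + y \<in> S0" using h j by (auto intro: span_add estar_S0_scale)
      ultimately show "c *\<^sub>R v + y \<in> S0 \<and> (\<forall>i. blinfun_apply (K (c *\<^sub>R v + y)) (e i) = lam i * blinfun_apply (c *\<^sub>R v + y) (e i))"
        by blast
    qed
    then show ?thesis by blast
  qed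
  define t where "t n = (\<Sum>i<n. lam i *\<^sub>R e i)" for n
  have K4: "blinfun_apply (K y) (u n) = blinfun_apply y (t n)" if "y \<in> S0" for y n
    unfolding u_def t_def using K3[OF that]
    by (simp add: blinfun.sum_right blinfun.scaleR_right mult.commute)
  define F where "F = K ` (Y \<inter> cball 0 1)"
  have FY: "closure F \<subseteq> Y"
    by (rule closure_minimal) (use KY Y_closed in \<open>auto simp: F_def\<close>)
  have "Cauchy t"
  proof (rule ccontr)
    assume nc: "\<not> Cauchy t"
    then obtain \<epsilon> :: real where \<epsilon>: "\<epsilon> > 0" and "\<forall>M. \<exists>m\<ge>M. \<exists>n\<ge>M. \<not> dist (t m) (t n) < \<epsilon>"
      unfolding Cauchy_def by blast
    note nc2 = this(2)
    have "\<exists>mn. fst mn \<ge> M \<and> snd mn \<ge> M \<and> \<epsilon> \<le> dist (t (fst mn)) (t (snd mn))" for M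
    proof -
      from nc2 obtain m n where "m \<ge> M" "n \<ge> M" "\<not> dist (t m) (t n) < \<epsilon>" by blast
      then show ?thesis by (intro exI[of _ "(m, n)"]) simp
    qed
    then have "\<forall>M. \<exists>mn. fst mn \<ge> M \<and> snd mn \<ge> M \<and> \<epsilon> \<le> dist (t (fst mn)) (t (snd mn))" by blast
    from choice[OF this] obtain mn where mn0: "\<forall>M. fst (mn M) \<ge> M \<and> snd (mn M) \<ge> M \<and> \<epsilon> \<le> dist (t (fst (mn M))) (t (snd (mn M)))"
      by blast
    have mn: "fst (mn M) \<ge> M \<and> snd (mn M) \<ge> M \<and> \<epsilon> \<le> dist (t (fst (mn M))) (t (snd (mn M)))" for M
      using mn0 by blast
    define vv where "vv k = t (fst (mn k)) - t (snd (mn k))" for k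
    define NN where "NN k = max (fst (mn k)) (snd (mn k))" for k
    have Pv: "P (NN k) (vv k) = vv k" for k
      unfolding vv_def NN_def t_def P_diff by (simp add: P_sum)
    have "\<forall>k. \<exists>y. y \<in> S0 \<and> norm y \<le> Kc \<and> blinfun_apply y (vv k) = norm (vv k)"
      using norming[OF Pv] by blast
    from choice[OF this] obtain yy where yy0: "\<forall>k. yy k \<in> S0 \<and> norm (yy k) \<le> Kc \<and> blinfun_apply (yy k) (vv k) = norm (vv k)"
      by blast
    have yy: "\<And>k. yy k \<in> S0" "\<And>k. norm (yy k) \<le> Kc" "\<And>k. blinfun_apply (yy k) (vv k) = norm (vv k)"
      using yy0 by blast+
    define ww where "ww k = (1 / Kc) *\<^sub>R yy k" for k
    have ww0: "ww k \<in> S0" for k unfolding ww_def by (intro span_mul yy(1))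
    have wwn: "norm (ww k) \<le> 1" for k
      unfolding ww_def using yy(2)[of k] Kc_pos by (simp add: divide_le_eq)
    have Kw: "\<forall>k. K (ww k) \<in> closure F"
    proof
      fix k
      have "ww k \<in> Y \<inter> cball 0 1" using S0_Y[OF ww0[of k]] wwn[of k] by (simp add: dist_norm)
      then have "K (ww k) \<in> F" unfolding F_def by (rule imageI)
      then show "K (ww k) \<in> closure F" using closure_subset by blast
    qed
    have sc: "seq_compact (closure F)" using compact_imp_seq_compact Kcpt unfolding F_def by blast
    obtain z r where z: "z \<in> closure F" and r: "strict_mono r" and lim: "((\<lambda>k. K (ww k)) \<circ> r) \<longlonglongrightarrow> z"
      using seq_compactE[OF sc Kw] by blast
    have zY: "z \<in> Y" using z FY by blast
    define \<eta> where "\<eta> = \<epsilon> / (8 * C1 * Kc)"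
    have \<eta>: "\<eta> > 0" unfolding \<eta>_def using \<epsilon> C1pos Kc_pos by simp
    obtain N0 where N0: "dist (z o\<^sub>L Pb N0) z < \<eta>"
      using compP_tendsto[OF zY] \<eta> unfolding tendsto_iff eventually_sequentially by blast
    obtain k0 where k0: "\<And>k. k \<ge> k0 \<Longrightarrow> dist (K (ww (r k))) z < \<eta>"
      using lim \<eta> unfolding tendsto_iff eventually_sequentially by auto
    define k where "k = max N0 k0"
    define j where "j = r k"
    have jk: "j \<ge> k" unfolding j_def using seq_suble[OF r] .
    define a where "a = fst (mn j)"
    define b where "b = snd (mn j)"
    have aN: "a \<ge> N0" "b \<ge> N0" using mn[of j] jk unfolding a_def b_def k_def by auto
    define g where "g = K (ww j)"
    have gdist: "norm (g - z) < \<eta>" using k0[of k] unfolding g_def j_def k_def by (simp add: dist_norm)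
    have "blinfun_apply g (u a) - blinfun_apply g (u b) = blinfun_apply (ww j) (vv j)"
      unfolding g_def K4[OF ww0] vv_def a_def b_def by (simp add: blinfun.diff_right)
    also have "\<dots> = norm (vv j) / Kc" unfolding ww_def using yy(3)[of j] by (simp add: blinfun.scaleR_left)
    finally have gv: "blinfun_apply g (u a) - blinfun_apply g (u b) = norm (vv j) / Kc" .
    have "\<epsilon> \<le> norm (vv j)" using mn[of j] unfolding vv_def a_def b_def by (simp add: dist_norm)
    then have low: "\<epsilon> / Kc \<le> blinfun_apply g (u a) - blinfun_apply g (u b)"
      unfolding gv using Kc_pos by (simp add: divide_right_mono)
    have zz: "\<bar>blinfun_apply z (u a) - blinfun_apply z (u b)\<bar> \<le> 2 * C1 * \<eta>"
    proof -
      have "\<bar>blinfun_apply z (u a) - blinfun_apply z (u b)\<bar> \<le> 2 * C1 * norm (z - (z o\<^sub>L Pb N0))"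
        by (rule Zlem[OF aN])
      also have "\<dots> \<le> 2 * C1 * \<eta>" using N0 C1pos by (simp add: dist_norm norm_minus_commute)
      finally show ?thesis .
    qed
    have gab: "\<bar>blinfun_apply (g - z) (u c)\<bar> \<le> \<eta> * C1" for c
    proof -
      have "\<bar>blinfun_apply (g - z) (u c)\<bar> \<le> norm (g - z) * norm (u c)"
        using norm_blinfun[of "g - z" "u c"] by simp
      also have "\<dots> \<le> \<eta> * C1" using gdist u_bd[of c] \<eta> by (intro mult_mono) auto
      finally show ?thesis .
    qed
    note ga = gab[of a] and gb = gab[of b]
    have "blinfun_apply g (u a) - blinfun_apply g (u b) \<le> 4 * C1 * \<eta>"
    proof -
      have q: "4 * C1 * \<eta> = 2 * C1 * \<eta> + 2 * (\<eta> * C1)" by (simp add: algebra_simps)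
      show ?thesis using zz ga gb q unfolding abs_le_iff blinfun.diff_left by linarith
    qed
    also have "4 * C1 * \<eta> = \<epsilon> / (2 * Kc)" unfolding \<eta>_def using C1pos Kc_pos by simp
    finally have "\<epsilon> / Kc \<le> \<epsilon> / (2 * Kc)" using low by linarith
    then show False using \<epsilon> Kc_pos by (simp add: divide_le_eq field_simps)
  qed
  then obtain x where x: "t \<longlonglongrightarrow> x" by (auto simp: Cauchy_convergent_iff convergent_def)
  have cx: "coef e i x = lam i" for i using coef_unique[OF x[unfolded t_def]] .
  have S0eq: "K y = (y o\<^sub>L Mb x)" if "y \<in> S0" for y
  proof -
    have "y \<in> S0 \<and> K y = (y o\<^sub>L Mb x)"
    proof (rule span_induct_alt[OF that, where h="\<lambda>y. y \<in> S0 \<and> K y = (y o\<^sub>L Mb x)"])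
      show "0 \<in> S0 \<and> K 0 = (0 o\<^sub>L Mb x)" by (simp add: K0 span_zero)
    next
      fix c v y assume v: "v \<in> range (estar e)" and h: "y \<in> S0 \<and> K y = (y o\<^sub>L Mb x)"
      from v obtain j where j: "v = estar e j" by blast
      have yY: "y \<in> Y" using h S0_Y by blast
      have "K (c *\<^sub>R v + y) = (c * lam j) *\<^sub>R estar e j + K y"
        unfolding j using Kadd[OF Y_scale[OF estar_Y] yY] Kscale[OF estar_Y] K1 by simp
      also have "\<dots> = ((c *\<^sub>R v + y) o\<^sub>L Mb x)"
        using h unfolding j by (simp add: comp_add comp_scale estar_Mb cx)
      finally have "K (c *\<^sub>R v + y) = ((c *\<^sub>R v + y) o\<^sub>L Mb x)" .
      moreover have "c *\<^sub>R v + y \<in> S0" using h j by (auto intro: span_add estar_S0_scale)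
      ultimately show "c *\<^sub>R v + y \<in> S0 \<and> K (c *\<^sub>R v + y) = ((c *\<^sub>R v + y) o\<^sub>L Mb x)" by blast
    qed
    then show ?thesis by blast
  qed
  have Yeq: "K y = (y o\<^sub>L Mb x)" if yY: "y \<in> Y" for y
  proof -
    have l1: "(\<lambda>N. K (y o\<^sub>L Pb N)) \<longlonglongrightarrow> (y o\<^sub>L Mb x)"
    proof -
      have "(\<lambda>N. ((y o\<^sub>L Pb N) o\<^sub>L Mb x)) \<longlonglongrightarrow> (y o\<^sub>L Mb x)"
        using bounded_linear.tendsto[OF bl_compL[of "Mb x"] compP_tendsto[OF yY]] by simp
      then show ?thesis using S0eq[OF compP_S0] by simp
    qed
    have l2: "(\<lambda>N. K (y o\<^sub>L Pb N)) \<longlonglongrightarrow> K y"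
    proof -
      have d: "(\<lambda>N. (y o\<^sub>L Pb N) - y) \<longlonglongrightarrow> 0"
        using tendsto_diff[OF compP_tendsto[OF yY] tendsto_const[of y]] by simp
      have "(\<lambda>N. K (y o\<^sub>L Pb N) - K y) \<longlonglongrightarrow> 0"
      proof (rule Lim_null_comparison[OF always_eventually])
        show "\<forall>N. norm (K (y o\<^sub>L Pb N) - K y) \<le> \<bar>B0\<bar> * norm ((y o\<^sub>L Pb N) - y)"
        proof
          fix N
          have m: "(y o\<^sub>L Pb N) \<in> Y" by (rule S0_Y[OF compP_S0])
          have "norm (K (y o\<^sub>L Pb N) - K y) = norm (K ((y o\<^sub>L Pb N) - y))"
            using Kdiff[OF m yY] by simp
          also have "\<dots> \<le> B0 * norm ((y o\<^sub>L Pb N) - y)" by (rule Kbd[OF Y_diff[OF m yY]])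
          also have "\<dots> \<le> \<bar>B0\<bar> * norm ((y o\<^sub>L Pb N) - y)" by (intro mult_right_mono) auto
          finally show "norm (K (y o\<^sub>L Pb N) - K y) \<le> \<bar>B0\<bar> * norm ((y o\<^sub>L Pb N) - y)" .
        qed
        show "(\<lambda>N. \<bar>B0\<bar> * norm ((y o\<^sub>L Pb N) - y)) \<longlonglongrightarrow> 0"
          using tendsto_mult[OF tendsto_const[of "\<bar>B0\<bar>"] tendsto_norm[OF d]] by simp
      qed
      then show ?thesis using Lim_null by (simp add: LIM_zero_iff)
    qed
    show ?thesis using LIMSEQ_unique[OF l2 l1] .
  qed
  have "K = Dx x"
  proof
    fix y show "K y = Dx x y" by (cases "y \<in> Y") (simp_all add: Dx_def Yeq Kout)
  qed
  then show ?thesis by blast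
qed

end



theorem corollary1p3:
  fixes e :: "nat \<Rightarrow> 'a::banach"
  assumes basis: "schauder_basis e"
    and C1: "C1 > 0" "\<forall>n. norm (\<Sum>i<n. e i) \<le> C1"
    and C2: "C2 > 0" "\<forall>n (a::nat \<Rightarrow> real) b.
        norm (\<Sum>i<n. (a i * b i) *\<^sub>R e i)
          \<le> C2 * norm (\<Sum>i<n. a i *\<^sub>R e i) * norm (\<Sum>i<n. b i *\<^sub>R e i)"
  shows "\<exists>\<Phi>. bij_betw \<Phi> (diag_alg e) (UNIV :: (real \<times> 'a) set)
     \<and> (\<forall>S\<in>diag_alg e. \<forall>T\<in>diag_alg e. \<Phi> (\<lambda>y. S y + T y) = \<Phi> S + \<Phi> T)
     \<and> (\<forall>c. \<forall>T\<in>diag_alg e. \<Phi> (\<lambda>y. c *\<^sub>R T y) = c *\<^sub>R \<Phi> T)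
     \<and> (\<forall>S\<in>diag_alg e. \<forall>T\<in>diag_alg e. \<Phi> (S \<circ> T) = umul e (\<Phi> S) (\<Phi> T))
     \<and> (\<exists>M>0. \<forall>T\<in>diag_alg e. unorm (\<Phi> T) \<le> M * onorm T)
     \<and> (\<exists>M>0. \<forall>T\<in>diag_alg e. onorm T \<le> M * unorm (\<Phi> T))
     \<and> \<Phi> (idY e) = (1, 0)
     \<and> (\<forall>i. \<Phi> (rank1 e i) = (0, e i))"
proof -
  interpret SB e C1 C2 by unfold_locales (use assms in auto)
  define Q where "Q u = Psi (fst u) (snd u)" for u :: "real \<times> 'a"
  have injQ: "inj Q"
  proof (rule injI)
    fix u v assume "Q u = Q v"
    then have "fst u = fst v \<and> snd u = snd v" unfolding Q_def by (rule Psi_inj)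
    then show "u = v" by (simp add: prod_eq_iff)
  qed
  have rangeQ: "range Q = diag_alg e"
  proof
    show "range Q \<subseteq> diag_alg e" unfolding Q_def using Psi_in by blast
  next
    show "diag_alg e \<subseteq> range Q"
    proof
      fix T assume "T \<in> diag_alg e"
      then obtain c K where T: "T = (\<lambda>y. c *\<^sub>R idY e y + K y)" and K: "K \<in> Kdiag e"
        unfolding diag_alg_def by blast
      obtain x where "K = Dx x" using Kdiag_surj[OF K] by blast
      then have "T = Q (c, x)" unfolding T Q_def Psi_def by simp
      then show "T \<in> range Q" by blast
    qed
  qed
  have bijQ: "bij_betw Q UNIV (diag_alg e)" unfolding bij_betw_def using injQ rangeQ by blast
  define \<Phi> where "\<Phi> = inv_into UNIV Q"
  have PhiQ: "\<Phi> (Q u) = u" for u unfolding \<Phi>_def using injQ by simp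
  have QPhi: "T \<in> diag_alg e \<Longrightarrow> Q (\<Phi> T) = T" for T
    unfolding \<Phi>_def using rangeQ by (metis f_inv_into_f)
  have ex: "T \<in> diag_alg e \<Longrightarrow> \<exists>u. T = Q u" for T using rangeQ by blast
  have b1: "bij_betw \<Phi> (diag_alg e) UNIV" unfolding \<Phi>_def by (rule bij_betw_inv_into[OF bijQ])
  have b2: "\<forall>S\<in>diag_alg e. \<forall>T\<in>diag_alg e. \<Phi> (\<lambda>y. S y + T y) = \<Phi> S + \<Phi> T"
  proof (intro ballI)
    fix S T assume "S \<in> diag_alg e" "T \<in> diag_alg e"
    then obtain u v where uv: "S = Q u" "T = Q v" using ex by blast
    have "(\<lambda>y. S y + T y) = Q (u + v)" unfolding uv Q_def Psi_add by simp
    then show "\<Phi> (\<lambda>y. S y + T y) = \<Phi> S + \<Phi> T" unfolding uv using PhiQ by simp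
  qed
  have b3: "\<forall>c. \<forall>T\<in>diag_alg e. \<Phi> (\<lambda>y. c *\<^sub>R T y) = c *\<^sub>R \<Phi> T"
  proof (intro allI ballI)
    fix c T assume "T \<in> diag_alg e"
    then obtain u where u: "T = Q u" using ex by blast
    have "(\<lambda>y. c *\<^sub>R T y) = Q (c *\<^sub>R u)" unfolding u Q_def Psi_scale by simp
    then show "\<Phi> (\<lambda>y. c *\<^sub>R T y) = c *\<^sub>R \<Phi> T" unfolding u using PhiQ by simp
  qed
  have b4: "\<forall>S\<in>diag_alg e. \<forall>T\<in>diag_alg e. \<Phi> (S \<circ> T) = umul e (\<Phi> S) (\<Phi> T)"
  proof (intro ballI)
    fix S T assume "S \<in> diag_alg e" "T \<in> diag_alg e"
    then obtain u v where uv: "S = Q u" "T = Q v" using ex by blast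
    have "S \<circ> T = Q (umul e u v)" unfolding uv Q_def using Psi_comp[of "fst u" "snd u" "fst v" "snd v"] by simp
    then show "\<Phi> (S \<circ> T) = umul e (\<Phi> S) (\<Phi> T)" unfolding uv using PhiQ by simp
  qed
  have b5: "\<exists>M>0. \<forall>T\<in>diag_alg e. unorm (\<Phi> T) \<le> M * onorm T"
  proof (intro exI conjI ballI)
    show "1 + 2 * Kc * C1 > 0" using Kc_pos C1pos by (simp add: add_pos_pos)
    fix T assume "T \<in> diag_alg e"
    then obtain u where u: "T = Q u" using ex by blast
    show "unorm (\<Phi> T) \<le> (1 + 2 * Kc * C1) * onorm T"
      unfolding u PhiQ unfolding unorm_def Q_def by (rule onorm_Psi_lower)
  qed
  have b6: "\<exists>M>0. \<forall>T\<in>diag_alg e. onorm T \<le> M * unorm (\<Phi> T)"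
  proof (intro exI conjI ballI)
    show "max 1 C2 > (0::real)" by simp
    fix T assume "T \<in> diag_alg e"
    then obtain u where u: "T = Q u" using ex by blast
    show "onorm T \<le> max 1 C2 * unorm (\<Phi> T)"
      unfolding u PhiQ unfolding unorm_def Q_def by (rule onorm_Psi_upper)
  qed
  have b7: "\<Phi> (idY e) = (1, 0)" using PhiQ[of "(1, 0)"] unfolding Q_def by (simp add: Psi_1)
  have b8: "\<forall>i. \<Phi> (rank1 e i) = (0, e i)"
  proof
    fix i show "\<Phi> (rank1 e i) = (0, e i)" using PhiQ[of "(0, e i)"] unfolding Q_def by (simp add: Psi_rank1)
  qed
  show ?thesis using b1 b2 b3 b4 b5 b6 b7 b8 by blast
qed


end
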